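(* Let $\mathcal X=\{1,\dots,k\}$ and let $G$ be a generator matrix on $\mathcal X$ with no zero entries; let $\mu$ be its unique stochastic vector with $\mu^tG=0$. Let $M\in\mathbb N$ be such that $I+G/n$ is non-negative for $n>M$, $K_n=I+\frac Gn\mathbb 1(n>M)$, let $\mathbf T$ be the inhomogeneous Markov chain with kernels $\{K_n\}$ (from time $n$ to $n+1$), and let $\nu=\langle\nu_1,\dots,\nu_k\rangle$ be the distributional limit of $\langle\frac1n\sum_{j=1}^n\delta_{T_j}(i)\rangle_{i\in\mathcal X}$. Let $\tilde K_j=(I-G/j)^{-1}$ for $j\ge1$ and let $\mathbf Z$ be the inhomogeneous Markov chain with initial distribution $\mu$ and kernels $\{\tilde K_n\}_{n\ge1}$. Then $\tilde K_n=K_n+O(n^{-2})$, and $$\nu\overset d=\lim_{n\to\infty}\frac1n\Big\langle\sum_{j=1}^n\delta_{Z_j}(i)\Big\rangle_{i\in\mathcal X}.$$ Moreover, for $\mathbf m=(m_1,\dots,m_k)\in\mathbb N_0^k$ with $N=\sum_im_i>0$, $$\mathbb E\Big[\prod_{i=1}^k\nu_i^{m_i}\Big]=\binom{N}{m_1,\dots,m_k}^{-1}\mathbb P\Big(\sum_{j=1}^N\mathbb 1(Z_j=i)=m_i,\ 1\le i\le k\Big),$$ and in particular $\mathbb E[\nu_i^N]=\mathbb P(Z_1=\dots=Z_N=i)$.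
   Context: A generator matrix: $G_{i,j}\ge0$ for $i\ne j$ and $G_{i,i}=-\sum_{j\ne i}G_{i,j}$. For each $j\ge1$, $(I-G/j)^{-1}$ exists and is a stochastic matrix. The limit law $\nu$ does not depend on the initial distribution of $\mathbf T$. *)

theory Defs
  imports "HOL-Probability.Probability" "HOL-Library.Landau_Symbols"
begin

text \<open>States: a finite type 'a (playing the role of X = {1,..,k}, k = CARD('a)).
  Matrices are real^'a^'a; the row index is the current state.\<close>

definition generator_matrix :: "real^'a^'a \<Rightarrow> bool" where
  "generator_matrix G \<longleftrightarrow>
     (\<forall>i j. i \<noteq> j \<longrightarrow> G $ i $ j \<ge> 0) \<and>
     (\<forall>i. G $ i $ i = - (\<Sum>j\<in>UNIV - {i}. G $ i $ j))"

definition stochastic_vector :: "real^'a \<Rightarrow> bool" where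
  "stochastic_vector p \<longleftrightarrow> (\<forall>i. p $ i \<ge> 0) \<and> (\<Sum>i\<in>UNIV. p $ i) = 1"

text \<open>Probability that an inhomogeneous Markov chain with initial distribution p
  (law of X_1) and kernels K n (from time n to time n+1) has path
  (X_1,...,X_N) = xs, where N = length xs.\<close>

definition path_prob :: "real^'a \<Rightarrow> (nat \<Rightarrow> real^'a^'a) \<Rightarrow> 'a list \<Rightarrow> real" where
  "path_prob p K xs =
     (if xs = [] then 1
      else p $ hd xs * (\<Prod>j<length xs - 1. K (Suc j) $ (xs ! j) $ (xs ! Suc j)))"

definition occ :: "'a list \<Rightarrow> real^'a" where
  "occ xs = (\<chi> i. real (count_list xs i) / real (length xs))"

definition occ_expect :: "real^'a \<Rightarrow> (nat \<Rightarrow> real^'a^'a) \<Rightarrow> nat \<Rightarrow> (real^'a \<Rightarrow> real) \<Rightarrow> real" where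
  "occ_expect p K n f = (\<Sum>xs\<in>{xs. length xs = n}. path_prob p K xs * f (occ xs))"

text \<open>Convergence in distribution of the occupation vectors of the chain to the
  probability law nu on real^'a (tested against bounded continuous functions).\<close>

definition occ_converges_to :: "real^'a \<Rightarrow> (nat \<Rightarrow> real^'a^'a) \<Rightarrow> (real^'a) measure \<Rightarrow> bool" where
  "occ_converges_to p K \<nu> \<longleftrightarrow>
     (\<forall>f::real^'a \<Rightarrow> real. continuous_on UNIV f \<longrightarrow> bounded (range f) \<longrightarrow>
        (\<lambda>n. occ_expect p K n f) \<longlonglongrightarrow> (\<integral>x. f x \<partial>\<nu>))"

end

theory Submission
  imports Defs "HOL-Analysis.Harmonic_Numbers" "HOL-Real_Asymp.Real_Asymp"
begin



lemma gen_rowsum: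
  assumes "generator_matrix G"
  shows "(\<Sum>j\<in>UNIV. G $ i $ j) = 0"
proof -
  have "(\<Sum>j\<in>UNIV. G $ i $ j) = G $ i $ i + (\<Sum>j\<in>UNIV - {i}. G $ i $ j)"
    by (simp add: sum.remove)
  then show ?thesis using assms unfolding generator_matrix_def by simp
qed

lemma mat1_entry: "(mat 1 :: real^'a^'a) $ i $ j = (if i = j then 1 else 0)"
  by (simp add: mat_def)

lemma minprinc:
  fixes G :: "real^'a^'a" and v :: "real^'a" and t :: real
  assumes gen: "generator_matrix G" and t: "t \<ge> 0"
    and b: "\<forall>i. ((mat 1 - t *\<^sub>R G) *v v) $ i \<ge> 0"
  shows "v $ i \<ge> 0"
proof -
  define mn where "mn = Min (range (\<lambda>i. v $ i))"
  have "mn \<in> range (\<lambda>i. v $ i)" unfolding mn_def by (intro Min_in) auto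
  then obtain i0 where i0: "v $ i0 = mn" by auto
  have le: "\<And>j. mn \<le> v $ j" unfolding mn_def by (intro Min_le) auto
  have e: "((mat 1 - t *\<^sub>R G) *v v) $ i0 = v $ i0 - t * (\<Sum>j\<in>UNIV. G $ i0 $ j * v $ j)"
  proof -
    have "((mat 1 - t *\<^sub>R G) *v v) $ i0 = (\<Sum>j\<in>UNIV. ((if i0 = j then 1 else 0) - t * G$i0$j) * v$j)"
      by (simp add: matrix_vector_mult_def mat1_entry)
    also have "\<dots> = (\<Sum>j\<in>UNIV. (if i0 = j then v$j else 0)) - t * (\<Sum>j\<in>UNIV. G $ i0 $ j * v $ j)"
    proof -
      have "(\<Sum>j\<in>UNIV. ((if i0 = j then 1 else 0) - t * G$i0$j) * v$j) = (\<Sum>j\<in>UNIV. (if i0 = j then v$j else 0) - t * (G $ i0 $ j * v $ j))"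
        by (intro sum.cong) (auto simp: algebra_simps)
      then show ?thesis by (simp add: sum_subtractf sum_distrib_left)
    qed
    finally show ?thesis by simp
  qed
  have "(\<Sum>j\<in>UNIV. G $ i0 $ j * v $ j) = (\<Sum>j\<in>UNIV. G $ i0 $ j * (v $ j - v $ i0))"
    using gen_rowsum[OF gen, of i0]
    by (simp add: right_diff_distrib sum_subtractf sum_distrib_right[symmetric])
  also have "\<dots> \<ge> 0"
  proof (intro sum_nonneg)
    fix j
    show "0 \<le> G $ i0 $ j * (v $ j - v $ i0)"
    proof (cases "j = i0")
      case False
      then have "G $ i0 $ j \<ge> 0" using gen unfolding generator_matrix_def by auto
      then show ?thesis using le[of j] i0 by simp
    qed simp
  qed
  finally have "v $ i0 \<ge> ((mat 1 - t *\<^sub>R G) *v v) $ i0"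
    using e t by (simp add: mult_nonneg_nonneg)
  then have "v $ i0 \<ge> 0" using b by (meson order.trans)
  then show ?thesis using le[of i] i0 by simp
qed

lemma matrix_diff_ldistrib: "(A::real^'n^'m) ** (B - C) = A ** B - A ** C"
  by (vector matrix_matrix_mult_def sum_subtractf algebra_simps)

lemma matrix_diff_rdistrib: "((B::real^'n^'m) - C) ** A = B ** A - C ** A"
  by (vector matrix_matrix_mult_def sum_subtractf algebra_simps)

lemma matrix_add_rdistrib': "((B::real^'n^'m) + C) ** A = B ** A + C ** A"
  by (vector matrix_matrix_mult_def sum.distrib algebra_simps)

lemma resolvent_invertible:
  fixes G :: "real^'a^'a"
  assumes gen: "generator_matrix G" and t: "t \<ge> 0"
  shows "invertible (mat 1 - t *\<^sub>R G)"
proof -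
  have "\<forall>x. (mat 1 - t *\<^sub>R G) *v x = 0 \<longrightarrow> x = 0"
  proof (intro allI impI)
    fix x :: "real^'a" assume h: "(mat 1 - t *\<^sub>R G) *v x = 0"
    have a: "x $ i \<ge> 0" for i by (rule minprinc[OF gen t]) (simp add: h)
    have "(mat 1 - t *\<^sub>R G) *v (- x) = 0" using h by (metis add.inverse_neutral matrix_vector_mult_diff_distrib diff_0 diff_self)
    then have b: "(- x) $ i \<ge> 0" for i by (intro minprinc[OF gen t]) simp
    show "x = 0" using a b by (simp add: vec_eq_iff) (meson antisym neg_0_le_iff_le)
  qed
  then show ?thesis using matrix_left_invertible_ker invertible_left_inverse by blast
qed

lemma resolvent_props:
  fixes G :: "real^'a^'a"
  assumes gen: "generator_matrix G" and t: "t \<ge> 0"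
  defines "B \<equiv> matrix_inv (mat 1 - t *\<^sub>R G)"
  shows "B ** (mat 1 - t *\<^sub>R G) = mat 1" "(mat 1 - t *\<^sub>R G) ** B = mat 1"
    "\<And>i j. B $ i $ j \<ge> 0" "\<And>i. (\<Sum>j\<in>UNIV. B $ i $ j) = 1"
    "\<And>i j. B $ i $ j \<le> 1"
    "B = mat 1 + t *\<^sub>R G + (t^2) *\<^sub>R (B ** (G ** G))"
proof -
  let ?A = "mat 1 - t *\<^sub>R G"
  have inv: "invertible ?A" by (rule resolvent_invertible[OF gen t])
  then have both: "?A ** B = mat 1 \<and> B ** ?A = mat 1"
    unfolding B_def matrix_inv_def invertible_def by (rule someI_ex)
  show l: "B ** ?A = mat 1" and r: "?A ** B = mat 1" using both by auto
  show nn: "B $ i $ j \<ge> 0" for i j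
  proof -
    have "?A *v (B *v axis j 1) = axis j 1" by (simp add: matrix_vector_mul_assoc r)
    then have "(B *v axis j 1) $ i \<ge> 0"
      by (intro minprinc[OF gen t]) (simp add: axis_def)
    then show ?thesis by (simp add: matrix_vector_mult_def axis_def if_distrib cong: if_cong)
  qed
  have one: "?A *v (vec 1) = vec 1"
  proof -
    have "(G *v vec 1) = 0" using gen_rowsum[OF gen]
      by (simp add: vec_eq_iff matrix_vector_mult_def)
    then show ?thesis by (simp add: matrix_vector_mult_diff_rdistrib scaleR_matrix_vector_assoc[symmetric])
  qed
  have "B *v vec 1 = vec 1"
    using one by (metis l matrix_vector_mul_assoc matrix_vector_mul_lid)
  then show rs: "(\<Sum>j\<in>UNIV. B $ i $ j) = 1" for i
    by (simp add: vec_eq_iff matrix_vector_mult_def)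
  show "B $ i $ j \<le> 1" for i j
  proof -
    have "B $ i $ j \<le> (\<Sum>j\<in>UNIV. B $ i $ j)"
      by (rule member_le_sum) (auto simp: nn)
    then show ?thesis using rs by simp
  qed
  have e1: "B = mat 1 + t *\<^sub>R (B ** G)"
  proof -
    have "B ** ?A = B - t *\<^sub>R (B ** G)"
      by (simp add: matrix_diff_ldistrib matrix_scalar_ac scalar_matrix_assoc)
    then show ?thesis using l by (simp add: algebra_simps)
  qed
  have "B ** G = G + t *\<^sub>R (B ** (G ** G))"
    by (subst e1) (simp add: matrix_add_rdistrib' scalar_matrix_assoc[symmetric] matrix_mul_assoc)
  then show "B = mat 1 + t *\<^sub>R G + (t^2) *\<^sub>R (B ** (G ** G))"
    by (subst e1) (simp add: algebra_simps power2_eq_square)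
qed




lemma seq_aux:
  fixes a a' b c r s X :: real
  assumes "a' \<le> (1 - c / s) * a + b" "b \<le> X" "c * r / s \<le> c * a / s" "c * r / s = 2 * X"
  shows "a' \<le> a - X"
proof -
  have "(1 - c / s) * a = a - c * a / s" by (simp add: algebra_simps)
  then show ?thesis using assms by linarith
qed

lemma seq_zero:
  fixes a b :: "nat \<Rightarrow> real"
  assumes a0: "\<And>n. a n \<ge> 0" and c: "0 < c" "c \<le> 1"
    and rec: "\<And>n. n \<ge> nz \<Longrightarrow> a (Suc n) \<le> (1 - c / real (Suc n)) * a n + b n"
    and b: "(\<lambda>n. real (Suc n) * b n) \<longlonglongrightarrow> 0"
  shows "a \<longlonglongrightarrow> 0"
proof (rule LIMSEQ_I)
  fix r :: real assume r: "0 < r"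
  have "\<exists>no. \<forall>n\<ge>no. norm (real (Suc n) * b n - 0) < c * r / 2"
    using b c r by (intro LIMSEQ_D) auto
  then obtain N0 where N0: "\<And>n. n \<ge> N0 \<Longrightarrow> \<bar>real (Suc n) * b n\<bar> < c * r / 2"
    by auto
  define N1 where "N1 = max N0 nz"
  have bn: "b n \<le> c * r / (2 * real (Suc n))" if "n \<ge> N1" for n
  proof -
    have "real (Suc n) * b n \<le> c * r / 2" using N0[of n] that unfolding N1_def by auto
    then show ?thesis by (simp add: field_simps)
  qed
  have recn: "a (Suc n) \<le> (1 - c / real (Suc n)) * a n + b n" if "n \<ge> N1" for n
    using rec that unfolding N1_def by auto
  have stay: "a (Suc n) < r" if "n \<ge> N1" "a n < r" for n
  proof -
    have f: "0 \<le> 1 - c / real (Suc n)" using c by (simp add: field_simps)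
    have "(1 - c / real (Suc n)) * a n \<le> (1 - c / real (Suc n)) * r"
      using that(2) f by (intro mult_left_mono) auto
    moreover have "(1 - c / real (Suc n)) * r + c * r / (2 * real (Suc n)) < r"
    proof -
      have p: "c * r / (2 * real (Suc n)) > 0" using c r by simp
      have "(1 - c / s) * r + c * r / (2 * s) = r - c * r / (2 * s)" if "s > 0" for s :: real
        using that by (simp add: field_simps)
      then have "(1 - c / real (Suc n)) * r + c * r / (2 * real (Suc n)) = r - c * r / (2 * real (Suc n))"
        by (metis of_nat_0_less_iff zero_less_Suc)
      then show ?thesis using p by linarith
    qed
    ultimately show ?thesis using recn[OF that(1)] bn[OF that(1)] by linarith
  qed
  have ex: "\<exists>n\<ge>N1. a n < r"
  proof (rule ccontr)
    assume "\<not> ?thesis"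
    then have ge: "\<And>n. n \<ge> N1 \<Longrightarrow> a n \<ge> r" by force
    have dec: "a (Suc n) \<le> a n - c * r / (2 * real (Suc n))" if "n \<ge> N1" for n
    proof -
      have e1: "(1 - c / real (Suc n)) * a n = a n - c * a n / real (Suc n)" by (simp add: algebra_simps)
      have e2: "c * r / real (Suc n) = 2 * (c * r / (2 * real (Suc n)))"
        by (metis (no_types) divide_divide_eq_left mult_2 nonzero_mult_div_cancel_left times_divide_eq_right zero_neq_numeral)
      have e3: "c * r / real (Suc n) \<le> c * a n / real (Suc n)"
        using ge[OF that] c by (intro divide_right_mono mult_left_mono) auto
      show ?thesis by (rule seq_aux[OF recn[OF that] bn[OF that] e3 e2])
    qed
    have ind: "a (N1 + j) \<le> a N1 - c * r / 2 * (harm (N1 + j) - harm N1)" for j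
    proof (induction j)
      case 0 then show ?case by simp
    next
      case (Suc j)
      have "a (N1 + Suc j) \<le> a (N1 + j) - c * r / (2 * real (Suc (N1 + j)))"
        using dec[of "N1 + j"] by simp
      also have "\<dots> \<le> a N1 - c * r / 2 * (harm (N1 + j) - harm N1) - c * r / (2 * real (Suc (N1 + j)))"
        using Suc by simp
      also have "\<dots> = a N1 - c * r / 2 * (harm (N1 + Suc j) - harm N1)"
        by (simp add: harm_Suc field_simps)
      finally show ?case .
    qed
    define X where "X = (a N1 / (c * r / 2)) + harm N1 + 1"
    define j where "j = nat \<lceil>exp X\<rceil>"
    have "exp X \<le> real j" unfolding j_def by linarith
    then have "exp X \<le> real (N1 + j) + 1" by simp
    then have "X \<le> ln (real (N1 + j) + 1)"
      by (metis exp_gt_zero exp_le_cancel_iff exp_ln order.strict_trans2 of_nat_add)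
    also have "\<dots> \<le> harm (N1 + j)" by (rule ln_le_harm)
    finally have hX: "X \<le> harm (N1 + j)" .
    have cr: "c * r / 2 > 0" using c r by simp
    have "c * r / 2 * (harm (N1 + j) - harm N1) \<ge> c * r / 2 * (a N1 / (c * r / 2) + 1)"
      using hX cr unfolding X_def by (intro mult_left_mono) auto
    also have "c * r / 2 * (a N1 / (c * r / 2) + 1) = a N1 + c * r / 2" using c r by (simp add: distrib_left)
    finally have "a (N1 + j) \<le> - (c * r / 2)" using ind[of j] by linarith
    then show False using a0[of "N1 + j"] cr by linarith
  qed
  then obtain N2 where N2: "N2 \<ge> N1" "a N2 < r" by blast
  have "a n < r" if "n \<ge> N2" for n
    using that
  proof (induction n rule: dec_induct)
    case base then show ?case using N2 by simp
  next
    case (step n) then show ?case using stay[of n] N2 by simp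
  qed
  then show "\<exists>no. \<forall>n\<ge>no. norm (a n - 0) < r" using a0 by auto
qed




definition Fv :: "real^'a \<Rightarrow> (nat \<Rightarrow> real^'a^'a) \<Rightarrow> nat \<Rightarrow> ('a \<Rightarrow> nat) \<Rightarrow> 'a \<Rightarrow> real" where
  "Fv p L n m y = (\<Sum>xs\<in>{xs. length xs = Suc n \<and> last xs = y}.
       path_prob p L xs * (\<Prod>i\<in>UNIV. real (count_list xs i) ^ m i))"

definition mono :: "('a \<Rightarrow> nat) \<Rightarrow> real^'a \<Rightarrow> real" where
  "mono m x = (\<Prod>i\<in>UNIV. (x $ i) ^ m i)"

definition msum :: "('a::finite \<Rightarrow> nat) \<Rightarrow> nat" where
  "msum m = (\<Sum>i\<in>UNIV. m i)"

lemma fin_len: "finite {xs::'a::finite list. length xs = n}"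
  using finite_lists_length_eq[of "UNIV::'a set" n] by simp

lemma fin_len': "finite {xs::'a::finite list. length xs = n \<and> P xs}"
  by (rule finite_subset[OF _ fin_len[of n]]) auto

lemma pp_single: "path_prob p L [y] = p $ y"
  by (simp add: path_prob_def)

lemma pp_snoc:
  assumes "xs \<noteq> []"
  shows "path_prob p L (xs @ [y]) = path_prob p L xs * L (length xs) $ last xs $ y"
proof -
  obtain l where l: "length xs = Suc l" using assms by (cases xs) auto
  have "(\<Prod>j<length (xs @ [y]) - 1. L (Suc j) $ ((xs @ [y]) ! j) $ ((xs @ [y]) ! Suc j))
      = (\<Prod>j<Suc l. L (Suc j) $ ((xs @ [y]) ! j) $ ((xs @ [y]) ! Suc j))" using l by simp
  also have "\<dots> = (\<Prod>j<l. L (Suc j) $ ((xs @ [y]) ! j) $ ((xs @ [y]) ! Suc j)) *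
      L (Suc l) $ ((xs @ [y]) ! l) $ ((xs @ [y]) ! Suc l)" by simp
  also have "(\<Prod>j<l. L (Suc j) $ ((xs @ [y]) ! j) $ ((xs @ [y]) ! Suc j))
      = (\<Prod>j<length xs - 1. L (Suc j) $ (xs ! j) $ (xs ! Suc j))"
    using l by (intro prod.cong) (auto simp: nth_append)
  also have "L (Suc l) $ ((xs @ [y]) ! l) $ ((xs @ [y]) ! Suc l) = L (length xs) $ last xs $ y"
    using l assms by (simp add: nth_append last_conv_nth)
  finally show ?thesis using assms by (simp add: path_prob_def)
qed

lemma sum_snoc:
  "(\<Sum>xs\<in>{xs::'a::finite list. length xs = Suc (Suc n) \<and> last xs = y}. f xs)
     = (\<Sum>xs\<in>{xs. length xs = Suc n}. f (xs @ [y]))"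
proof -
  have eq: "{xs::'a list. length xs = Suc (Suc n) \<and> last xs = y} = (\<lambda>xs. xs @ [y]) ` {xs. length xs = Suc n}"
  proof (intro set_eqI iffI)
    fix zs :: "'a list" assume "zs \<in> {xs. length xs = Suc (Suc n) \<and> last xs = y}"
    then have z: "length zs = Suc (Suc n)" "last zs = y" by auto
    then have "zs = butlast zs @ [y]" by (metis append_butlast_last_id list.size(3) nat.distinct(1))
    moreover have "length (butlast zs) = Suc n" using z by simp
    ultimately show "zs \<in> (\<lambda>xs. xs @ [y]) ` {xs. length xs = Suc n}" by blast
  qed auto
  have "inj_on (\<lambda>xs. xs @ [y]) {xs::'a list. length xs = Suc n}" by (auto simp: inj_on_def)
  then show ?thesis unfolding eq by (simp add: sum.reindex)
qed

lemma sum_last: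
  "(\<Sum>xs\<in>{xs::'a::finite list. length xs = Suc n}. g xs)
     = (\<Sum>x\<in>UNIV. \<Sum>xs\<in>{xs. length xs = Suc n \<and> last xs = x}. g xs)"
proof -
  have "(\<Sum>x\<in>UNIV. \<Sum>xs\<in>{xs\<in>{xs::'a list. length xs = Suc n}. last xs = x}. g xs)
        = (\<Sum>xs\<in>{xs::'a list. length xs = Suc n}. g xs)"
    by (rule sum.group) (auto simp: fin_len)
  then show ?thesis by simp
qed

lemma binom_prod:
  fixes c :: "'a::finite \<Rightarrow> real"
  shows "(\<Prod>i\<in>UNIV. (c i + (if i = y then 1 else 0)) ^ m i)
       = (\<Sum>r\<le>m y. real (m y choose r) * (\<Prod>i\<in>UNIV. c i ^ ((m(y := r)) i)))"
proof -
  define P where "P = (\<Prod>i\<in>UNIV - {y}. c i ^ m i)"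
  have l: "(\<Prod>i\<in>UNIV. (c i + (if i = y then 1 else 0)) ^ m i) = (c y + 1) ^ m y * P"
  proof -
    have "(\<Prod>i\<in>UNIV - {y}. (c i + (if i = y then 1 else 0)) ^ m i) = P"
      unfolding P_def by (intro prod.cong) auto
    then show ?thesis by (simp add: prod.remove[of UNIV y])
  qed
  have r: "(\<Prod>i\<in>UNIV. c i ^ ((m(y := r)) i)) = c y ^ r * P" for r
  proof -
    have "(\<Prod>i\<in>UNIV - {y}. c i ^ ((m(y := r)) i)) = P" unfolding P_def by (intro prod.cong) auto
    then show ?thesis by (simp add: prod.remove[of UNIV y])
  qed
  have "(c y + 1) ^ m y = (\<Sum>r\<le>m y. real (m y choose r) * c y ^ r)"
    by (simp add: binomial_ring)
  then show ?thesis unfolding l r by (simp add: sum_distrib_right mult.assoc)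
qed

lemma count_snoc: "real (count_list (xs @ [y]) i) = real (count_list xs i) + (if i = y then 1 else 0)"
  by auto

lemma Frec:
  "Fv p L (Suc n) m y = (\<Sum>r\<le>m y. real (m y choose r) *
       (\<Sum>x\<in>UNIV. Fv p L n (m(y := r)) x * L (Suc n) $ x $ y))"
proof -
  have "Fv p L (Suc n) m y = (\<Sum>xs\<in>{xs. length xs = Suc n}.
          path_prob p L (xs @ [y]) * (\<Prod>i\<in>UNIV. real (count_list (xs @ [y]) i) ^ m i))"
    unfolding Fv_def by (rule sum_snoc)
  also have "\<dots> = (\<Sum>xs\<in>{xs. length xs = Suc n}. \<Sum>r\<le>m y. real (m y choose r) *
          (path_prob p L xs * (\<Prod>i\<in>UNIV. real (count_list xs i) ^ ((m(y := r)) i)) * L (Suc n) $ last xs $ y))"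
  proof (intro sum.cong refl)
    fix xs :: "'a list" assume "xs \<in> {xs. length xs = Suc n}"
    then have xs: "xs \<noteq> []" "length xs = Suc n" by auto
    show "path_prob p L (xs @ [y]) * (\<Prod>i\<in>UNIV. real (count_list (xs @ [y]) i) ^ m i) =
      (\<Sum>r\<le>m y. real (m y choose r) *
          (path_prob p L xs * (\<Prod>i\<in>UNIV. real (count_list xs i) ^ ((m(y := r)) i)) * L (Suc n) $ last xs $ y))"
      unfolding pp_snoc[OF xs(1)] count_snoc binom_prod xs(2)
      by (simp add: sum_distrib_left sum_distrib_right mult_ac)
  qed
  also have "\<dots> = (\<Sum>r\<le>m y. real (m y choose r) * (\<Sum>xs\<in>{xs. length xs = Suc n}.
          path_prob p L xs * (\<Prod>i\<in>UNIV. real (count_list xs i) ^ ((m(y := r)) i)) * L (Suc n) $ last xs $ y))"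
    by (subst sum.swap) (simp add: sum_distrib_left)
  also have "\<dots> = (\<Sum>r\<le>m y. real (m y choose r) * (\<Sum>x\<in>UNIV. Fv p L n (m(y := r)) x * L (Suc n) $ x $ y))"
  proof (intro sum.cong refl arg_cong2[where f="(*)"])
    fix r
    show "(\<Sum>xs\<in>{xs. length xs = Suc n}.
          path_prob p L xs * (\<Prod>i\<in>UNIV. real (count_list xs i) ^ ((m(y := r)) i)) * L (Suc n) $ last xs $ y)
        = (\<Sum>x\<in>UNIV. Fv p L n (m(y := r)) x * L (Suc n) $ x $ y)"
      unfolding sum_last Fv_def
      by (intro sum.cong refl) (auto simp: sum_distrib_right)
  qed
  finally show ?thesis .
qed

lemma F0: "Fv p L 0 (\<lambda>_. 0) y = p $ y"
proof -
  have "{xs::'a list. length xs = Suc 0 \<and> last xs = y} = {[y]}"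
    by (auto simp: length_Suc_conv)
  then show ?thesis by (simp add: Fv_def pp_single)
qed

lemma occ_Fv:
  "occ_expect p L (Suc n) (mono m) = (\<Sum>y\<in>UNIV. Fv p L n m y) / real (Suc n) ^ msum m"
proof -
  have "occ_expect p L (Suc n) (mono m) =
     (\<Sum>xs\<in>{xs. length xs = Suc n}. path_prob p L xs * (\<Prod>i\<in>UNIV. real (count_list xs i) ^ m i) / real (Suc n) ^ msum m)"
    unfolding occ_expect_def
  proof (intro sum.cong refl)
    fix xs :: "'a list" assume "xs \<in> {xs. length xs = Suc n}"
    then have l: "length xs = Suc n" by simp
    have "mono m (occ xs) = (\<Prod>i\<in>UNIV. (real (count_list xs i) / real (Suc n)) ^ m i)"
      by (simp add: mono_def occ_def l)
    also have "\<dots> = (\<Prod>i\<in>UNIV. real (count_list xs i) ^ m i) / real (Suc n) ^ msum m"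
      by (simp add: power_divide prod_dividef msum_def power_sum)
    finally show "path_prob p L xs * mono m (occ xs) = path_prob p L xs * (\<Prod>i\<in>UNIV. real (count_list xs i) ^ m i) / real (Suc n) ^ msum m"
      by simp
  qed
  also have "\<dots> = (\<Sum>y\<in>UNIV. Fv p L n m y) / real (Suc n) ^ msum m"
    unfolding sum_divide_distrib[symmetric] sum_last Fv_def by simp
  finally show ?thesis .
qed




definition lists_m :: "('a::finite \<Rightarrow> nat) \<Rightarrow> 'a list set" where
  "lists_m m = {xs. length xs = msum m \<and> (\<forall>i. count_list xs i = m i)}"

lemma fin_lists_m: "finite (lists_m m)"
  unfolding lists_m_def by (rule fin_len')

lemma msum_upd:
  assumes "m x > 0"
  shows "msum (m(x := m x - 1)) = msum m - 1" "msum m = Suc (msum (m(x := m x - 1)))"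
proof -
  have a: "msum m = m x + (\<Sum>i\<in>UNIV - {x}. m i)" unfolding msum_def by (simp add: sum.remove[of UNIV x])
  have b: "msum (m(x := m x - 1)) = (m x - 1) + (\<Sum>i\<in>UNIV - {x}. m i)"
  proof -
    have "(\<Sum>i\<in>UNIV - {x}. (m(x := m x - 1)) i) = (\<Sum>i\<in>UNIV - {x}. m i)" by (intro sum.cong) auto
    then show ?thesis unfolding msum_def by (simp add: sum.remove[of UNIV x])
  qed
  show "msum (m(x := m x - 1)) = msum m - 1" "msum m = Suc (msum (m(x := m x - 1)))"
    using a b assms by auto
qed

lemma lists_m_snoc:
  assumes "m x > 0"
  shows "{w \<in> lists_m m. last w = x} = (\<lambda>w. w @ [x]) ` lists_m (m(x := m x - 1))"
proof (intro set_eqI iffI)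
  fix w assume "w \<in> {w \<in> lists_m m. last w = x}"
  then have w: "length w = msum m" "\<forall>i. count_list w i = m i" "last w = x"
    unfolding lists_m_def by auto
  have ne: "w \<noteq> []" using w(1) msum_upd(2)[where m=m and x=x, OF assms] by auto
  have e: "w = butlast w @ [x]" using ne w(3) by (metis append_butlast_last_id)
  have "\<forall>i. count_list (butlast w) i = (m(x := m x - 1)) i"
  proof
    fix i
    have "count_list w i = count_list (butlast w) i + (if x = i then 1 else 0)"
      by (subst e) simp
    then show "count_list (butlast w) i = (m(x := m x - 1)) i" using w(2) by auto
  qed
  moreover have "length (butlast w) = msum (m(x := m x - 1))" using w(1) msum_upd[where m=m and x=x, OF assms] by simp
  ultimately have "butlast w \<in> lists_m (m(x := m x - 1))"
    unfolding lists_m_def by simp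
  then show "w \<in> (\<lambda>w. w @ [x]) ` lists_m (m(x := m x - 1))"
    by (rule image_eqI[where f="\<lambda>w. w @ [x]", OF e])
next
  fix w assume "w \<in> (\<lambda>w. w @ [x]) ` lists_m (m(x := m x - 1))"
  then obtain v where v: "w = v @ [x]" "length v = msum (m(x := m x - 1))"
      "\<forall>i. count_list v i = (m(x := m x - 1)) i"
    unfolding lists_m_def by auto
  have "\<forall>i. count_list w i = m i"
  proof
    fix i
    have "count_list w i = count_list v i + (if x = i then 1 else 0)" using v(1) by simp
    then show "count_list w i = m i" using v(3) assms by (cases "i = x") auto
  qed
  moreover have "length w = msum m" using v(1,2) msum_upd[where m=m and x=x, OF assms] by simp
  ultimately show "w \<in> {w \<in> lists_m m. last w = x}" unfolding lists_m_def using v(1) by simp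
qed

lemma lists_m_last0:
  assumes "m x = 0" "msum m > 0"
  shows "{w \<in> lists_m m. last w = x} = {}"
proof (rule ccontr)
  assume "{w \<in> lists_m m. last w = x} \<noteq> {}"
  then obtain w where w: "length w = msum m" "\<forall>i. count_list w i = m i" "last w = x"
    unfolding lists_m_def by auto
  then have "w \<noteq> []" using assms(2) by auto
  then have "x \<in> set w" using w(3) by auto
  then have "count_list w x \<noteq> 0" by (simp add: count_list_0_iff)
  then show False using w(2) assms(1) by simp
qed

lemma lists_m_zero: "msum m = 0 \<Longrightarrow> lists_m m = {[]}"
  unfolding lists_m_def msum_def by auto

lemma prod_fact_upd:
  fixes m :: "'a::finite \<Rightarrow> nat"
  assumes "m x > 0"
  shows "(\<Prod>i\<in>UNIV. fact (m i) :: real) = real (m x) * (\<Prod>i\<in>UNIV. fact ((m(x := m x - 1)) i))"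
proof -
  have a: "(\<Prod>i\<in>UNIV. fact (m i) :: real) = fact (m x) * (\<Prod>i\<in>UNIV - {x}. fact (m i))"
    by (rule prod.remove) auto
  have b: "(\<Prod>i\<in>UNIV. fact ((m(x := m x - 1)) i) :: real) = fact (m x - 1) * (\<Prod>i\<in>UNIV - {x}. fact (m i))"
  proof -
    have "(\<Prod>i\<in>UNIV - {x}. fact ((m(x := m x - 1)) i) :: real) = (\<Prod>i\<in>UNIV - {x}. fact (m i))" by (intro prod.cong) auto
    then show ?thesis by (simp add: prod.remove[of UNIV x])
  qed
  have c: "fact (m x) = (real (m x) * fact (m x - 1) :: real)"
    using assms by (rule fact_reduce)
  show ?thesis unfolding a b c by (simp only: mult.assoc)
qed

locale resolv =
  fixes G :: "real^'a::finite^'a" and \<mu> :: "real^'a" and Kt :: "nat \<Rightarrow> real^'a^'a"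
  assumes gen: "generator_matrix G"
    and Ktd: "\<And>n. Kt n = matrix_inv (mat 1 - (1 / real n) *\<^sub>R G)"
begin

lemma Kt_props:
  shows "Kt n ** (mat 1 - (1 / real n) *\<^sub>R G) = mat 1" "(mat 1 - (1 / real n) *\<^sub>R G) ** Kt n = mat 1"
    "\<And>i j. Kt n $ i $ j \<ge> 0" "\<And>i. (\<Sum>j\<in>UNIV. Kt n $ i $ j) = 1"
    "\<And>i j. Kt n $ i $ j \<le> 1"
    "Kt n = mat 1 + (1 / real n) *\<^sub>R G + ((1 / real n)^2) *\<^sub>R (Kt n ** (G ** G))"
  using resolvent_props[OF gen, of "1 / real n"] unfolding Ktd[symmetric] by auto

definition Qv :: "'a list \<Rightarrow> 'a \<Rightarrow> real" where
  "Qv w y = (if w = [] then \<mu> $ y else path_prob \<mu> Kt w * Kt (length w) $ last w $ y)"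

definition W :: "('a \<Rightarrow> nat) \<Rightarrow> 'a \<Rightarrow> real" where
  "W m y = (\<Prod>i\<in>UNIV. fact (m i)) / fact (msum m) * (\<Sum>w\<in>lists_m m. Qv w y)"

lemma W0: "msum m = 0 \<Longrightarrow> W m y = \<mu> $ y"
proof -
  assume "msum m = 0"
  then have "\<And>i. m i = 0" unfolding msum_def by simp
  then show ?thesis using \<open>msum m = 0\<close> by (simp add: W_def lists_m_zero Qv_def)
qed

lemma Qv_snoc: "Qv (w @ [x]) y = Qv w x * Kt (Suc (length w)) $ x $ y"
  by (cases "w = []") (auto simp: Qv_def pp_snoc pp_single)

lemma W_rec:
  assumes N: "msum m > 0"
  shows "W m y = (\<Sum>x\<in>UNIV. real (m x) / real (msum m) * W (m(x := m x - 1)) x * Kt (msum m) $ x $ y)"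
proof -
  have grp: "(\<Sum>w\<in>lists_m m. Qv w y) = (\<Sum>x\<in>UNIV. \<Sum>w\<in>{w \<in> lists_m m. last w = x}. Qv w y)"
    by (rule sum.group[symmetric]) (auto simp: fin_lists_m)
  have inner: "(\<Prod>i\<in>UNIV. fact (m i)) / fact (msum m) * (\<Sum>w\<in>{w \<in> lists_m m. last w = x}. Qv w y)
      = real (m x) / real (msum m) * W (m(x := m x - 1)) x * Kt (msum m) $ x $ y" for x
  proof (cases "m x = 0")
    case True then show ?thesis by (simp add: lists_m_last0[where m=m and x=x, OF _ N])
  next
    case False
    then have mx: "m x > 0" by simp
    let ?m' = "m(x := m x - 1)"
    have "(\<Sum>w\<in>{w \<in> lists_m m. last w = x}. Qv w y) = (\<Sum>w\<in>lists_m ?m'. Qv (w @ [x]) y)"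
      unfolding lists_m_snoc[where m=m and x=x, OF mx] by (subst sum.reindex) (auto simp: inj_on_def)
    also have "\<dots> = (\<Sum>w\<in>lists_m ?m'. Qv w x) * Kt (msum m) $ x $ y"
      unfolding Qv_snoc sum_distrib_right
      by (intro sum.cong refl) (auto simp: lists_m_def msum_upd[where m=m and x=x, OF mx])
    finally have s: "(\<Sum>w\<in>{w \<in> lists_m m. last w = x}. Qv w y) = (\<Sum>w\<in>lists_m ?m'. Qv w x) * Kt (msum m) $ x $ y" .
    have f: "(fact (msum m) :: real) = real (msum m) * fact (msum ?m')"
      using msum_upd(2)[where m=m and x=x, OF mx] by (metis fact_Suc of_nat_Suc)
    show ?thesis unfolding s W_def f prod_fact_upd[where m=m and x=x, OF mx] by simp
  qed
  have "W m y = (\<Sum>x\<in>UNIV. (\<Prod>i\<in>UNIV. fact (m i)) / fact (msum m) * (\<Sum>w\<in>{w \<in> lists_m m. last w = x}. Qv w y))"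
    unfolding W_def grp by (rule sum_distrib_left)
  also have "\<dots> = (\<Sum>x\<in>UNIV. real (m x) / real (msum m) * W (m(x := m x - 1)) x * Kt (msum m) $ x $ y)"
    by (intro sum.cong refl inner)
  finally show ?thesis .
qed

lemma W_gen_eq:
  assumes N: "msum m > 0"
  shows "real (msum m) * W m z - (\<Sum>y\<in>UNIV. W m y * G $ y $ z) = real (m z) * W (m(z := m z - 1)) z"
proof -
  let ?N = "msum m"
  define v where "v x = real (m x) / real ?N * W (m(x := m x - 1)) x" for x
  have Wv: "W m y = (\<Sum>x\<in>UNIV. v x * Kt ?N $ x $ y)" for y unfolding W_rec[OF N] v_def ..
  have KI: "(\<Sum>y\<in>UNIV. Kt ?N $ x $ y * ((if y = z then 1 else 0) - G $ y $ z / real ?N)) = (if x = z then 1 else 0)" for x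
  proof -
    have "(Kt ?N ** (mat 1 - (1 / real ?N) *\<^sub>R G)) $ x $ z = (mat 1 :: real^'a^'a) $ x $ z"
      using Kt_props(1) by simp
    then show ?thesis by (simp add: matrix_matrix_mult_def mat1_entry)
  qed
  have "(\<Sum>y\<in>UNIV. W m y * ((if y = z then 1 else 0) - G $ y $ z / real ?N))
      = (\<Sum>x\<in>UNIV. v x * (\<Sum>y\<in>UNIV. Kt ?N $ x $ y * ((if y = z then 1 else 0) - G $ y $ z / real ?N)))"
    unfolding Wv sum_distrib_right sum_distrib_left by (subst sum.swap) (simp add: mult.assoc)
  also have "\<dots> = v z" unfolding KI by (simp add: if_distrib cong: if_cong)
  finally have e: "(\<Sum>y\<in>UNIV. W m y * ((if y = z then 1 else 0) - G $ y $ z / real ?N)) = v z" .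
  have "(\<Sum>y\<in>UNIV. W m y * ((if y = z then 1 else 0) - G $ y $ z / real ?N))
      = W m z - (\<Sum>y\<in>UNIV. W m y * G $ y $ z) / real ?N"
  proof -
    have "(\<Sum>y\<in>UNIV. W m y * ((if y = z then 1 else 0) - G $ y $ z / real ?N))
        = (\<Sum>y\<in>UNIV. (if y = z then W m y else 0) - W m y * G $ y $ z / real ?N)"
      by (intro sum.cong) (auto simp: right_diff_distrib)
    then show ?thesis by (simp add: sum_subtractf sum_divide_distrib)
  qed
  then have "W m z - (\<Sum>y\<in>UNIV. W m y * G $ y $ z) / real ?N = v z" using e by simp
  then show ?thesis using N unfolding v_def by (simp add: field_simps)
qed

lemma sum_W:
  assumes N: "msum m > 0"
  shows "(\<Sum>y\<in>UNIV. W m y) = (\<Prod>i\<in>UNIV. fact (m i)) / fact (msum m) * (\<Sum>w\<in>lists_m m. path_prob \<mu> Kt w)"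
proof -
  define c where "c = (\<Prod>i\<in>UNIV. fact (m i)) / (fact (msum m) :: real)"
  have inner: "(\<Sum>y\<in>UNIV. Qv w y) = path_prob \<mu> Kt w" if "w \<in> lists_m m" for w
  proof -
    have ne: "w \<noteq> []" using that N unfolding lists_m_def by auto
    have "(\<Sum>y\<in>UNIV. Qv w y) = (\<Sum>y\<in>UNIV. path_prob \<mu> Kt w * Kt (length w) $ last w $ y)"
      using ne by (simp add: Qv_def)
    also have "\<dots> = path_prob \<mu> Kt w * (\<Sum>y\<in>UNIV. Kt (length w) $ last w $ y)"
      by (rule sum_distrib_left[symmetric])
    also have "\<dots> = path_prob \<mu> Kt w" by (simp only: Kt_props(4) mult_1_right)
    finally show ?thesis .
  qed
  have "(\<Sum>y\<in>UNIV. W m y) = c * (\<Sum>y\<in>UNIV. \<Sum>w\<in>lists_m m. Qv w y)"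
    unfolding W_def c_def by (rule sum_distrib_left[symmetric])
  also have "\<dots> = c * (\<Sum>w\<in>lists_m m. \<Sum>y\<in>UNIV. Qv w y)"
    by (subst sum.swap) (rule refl)
  also have "\<dots> = c * (\<Sum>w\<in>lists_m m. path_prob \<mu> Kt w)"
    using inner by simp
  finally show ?thesis unfolding c_def .
qed

end




lemma lim_q: "(\<lambda>n. real (Suc n) / real (Suc (Suc n))) \<longlonglongrightarrow> 1"
  by real_asymp

lemma lim_q2: "(\<lambda>n. real (Suc (Suc n)) / real (Suc n)) \<longlonglongrightarrow> 1"
  by real_asymp

lemma lim_aN: "(\<lambda>n. real (Suc (Suc n)) * ((real (Suc n) / real (Suc (Suc n))) ^ N - 1)) \<longlonglongrightarrow> - real N"
proof -
  have e: "real (Suc (Suc n)) * ((real (Suc n) / real (Suc (Suc n))) ^ N - 1)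
     = - (\<Sum>i<N. (real (Suc n) / real (Suc (Suc n))) ^ i)" for n
  proof -
    have "real (Suc (Suc n)) * (real (Suc n) / real (Suc (Suc n)) - 1) = -1"
      by (simp add: field_simps)
    then show ?thesis unfolding power_diff_1_eq by (simp add: mult.assoc[symmetric])
  qed
  have "(\<lambda>n. - (\<Sum>i<N. (real (Suc n) / real (Suc (Suc n))) ^ i)) \<longlonglongrightarrow> - (\<Sum>i<N. 1 ^ i)"
    by (intro tendsto_intros lim_q)
  then show ?thesis unfolding e by simp
qed

lemma powid:
  fixes x y :: real
  assumes "y > 0"
  shows "y * x ^ a / y ^ (Suc a + e) = (x / y) ^ a * (1 / y) ^ e"
proof -
  have "y ^ (Suc a + e) = y * (y ^ a * y ^ e)" by (simp add: power_add)
  then have "y * x ^ a / y ^ (Suc a + e) = x ^ a / (y ^ a * y ^ e)" using assms by simp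
  also have "\<dots> = (x / y) ^ a * (1 / y) ^ e" by (simp add: power_divide)
  finally show ?thesis .
qed

lemma lim_kappa:
  assumes "a < b"
  shows "(\<lambda>n. real (Suc (Suc n)) * real (Suc n) ^ a / real (Suc (Suc n)) ^ b) \<longlonglongrightarrow> (if b = Suc a then 1 else 0)"
proof -
  obtain e where b: "b = Suc a + e" using assms by (metis less_iff_Suc_add add_Suc)
  have id: "real (Suc (Suc n)) * real (Suc n) ^ a / real (Suc (Suc n)) ^ b
      = (real (Suc n) / real (Suc (Suc n))) ^ a * (1 / real (Suc (Suc n))) ^ e" for n
    unfolding b by (rule powid) simp
  show ?thesis
  proof (cases "e = 0")
    case True
    have "(\<lambda>n. (real (Suc n) / real (Suc (Suc n))) ^ a * (1 / real (Suc (Suc n))) ^ e) \<longlonglongrightarrow> 1 ^ a * 1"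
      using True by (intro tendsto_intros lim_q) simp
    then show ?thesis unfolding id using True b by simp
  next
    case False
    have z: "(\<lambda>n. 1 / real (Suc (Suc n))) \<longlonglongrightarrow> 0" by real_asymp
    have "(\<lambda>n. (real (Suc n) / real (Suc (Suc n))) ^ a * (1 / real (Suc (Suc n))) ^ e) \<longlonglongrightarrow> 1 ^ a * 0 ^ e"
      by (intro tendsto_intros lim_q z)
    moreover have "(0::real) ^ e = 0" using False by simp
    ultimately show ?thesis unfolding id using False b by simp
  qed
qed

lemma contract:
  fixes P :: "'a::finite \<Rightarrow> 'a \<Rightarrow> real"
  assumes nn: "\<And>i j. P i j \<ge> 0" and rs: "\<And>i. (\<Sum>j\<in>UNIV. P i j) = 1"
    and col: "\<And>i. P i jz \<ge> \<delta>" and d: "\<delta> \<ge> 0" and z: "(\<Sum>i\<in>UNIV. z i) = 0"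
  shows "(\<Sum>j\<in>UNIV. \<bar>\<Sum>i\<in>UNIV. z i * P i j\<bar>) \<le> (1 - \<delta>) * (\<Sum>i\<in>UNIV. \<bar>z i\<bar>)"
proof -
  define q where "q j = (if j = jz then \<delta> else 0)" for j
  have qle: "q j \<le> P i j" for i j using col nn unfolding q_def by auto
  have e: "(\<Sum>i\<in>UNIV. z i * P i j) = (\<Sum>i\<in>UNIV. z i * (P i j - q j))" for j
  proof -
    have "(\<Sum>i\<in>UNIV. z i * (P i j - q j)) = (\<Sum>i\<in>UNIV. z i * P i j) - (\<Sum>i\<in>UNIV. z i) * q j"
      by (simp add: right_diff_distrib sum_subtractf sum_distrib_right)
    then show ?thesis using z by simp
  qed
  have "(\<Sum>j\<in>UNIV. \<bar>\<Sum>i\<in>UNIV. z i * P i j\<bar>) \<le> (\<Sum>j\<in>UNIV. \<Sum>i\<in>UNIV. \<bar>z i\<bar> * (P i j - q j))"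
  proof (intro sum_mono)
    fix j
    have "\<bar>\<Sum>i\<in>UNIV. z i * (P i j - q j)\<bar> \<le> (\<Sum>i\<in>UNIV. \<bar>z i * (P i j - q j)\<bar>)" by (rule sum_abs)
    also have "\<dots> = (\<Sum>i\<in>UNIV. \<bar>z i\<bar> * (P i j - q j))"
      using qle by (intro sum.cong) (auto simp: abs_mult)
    finally show "\<bar>\<Sum>i\<in>UNIV. z i * P i j\<bar> \<le> (\<Sum>i\<in>UNIV. \<bar>z i\<bar> * (P i j - q j))" unfolding e .
  qed
  also have "\<dots> = (\<Sum>i\<in>UNIV. \<bar>z i\<bar> * (\<Sum>j\<in>UNIV. P i j - q j))"
    by (subst sum.swap) (simp add: sum_distrib_left)
  also have "\<dots> = (\<Sum>i\<in>UNIV. \<bar>z i\<bar> * (1 - \<delta>))"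
    by (simp add: sum_subtractf rs q_def)
  also have "\<dots> = (1 - \<delta>) * (\<Sum>i\<in>UNIV. \<bar>z i\<bar>)"
    by (metis (no_types) mult.commute sum_distrib_right)
  finally show ?thesis .
qed

lemma nonexp:
  fixes P :: "'a::finite \<Rightarrow> 'a \<Rightarrow> real"
  assumes nn: "\<And>i j. P i j \<ge> 0" and rs: "\<And>i. (\<Sum>j\<in>UNIV. P i j) = 1"
  shows "(\<Sum>j\<in>UNIV. \<bar>\<Sum>i\<in>UNIV. z i * P i j\<bar>) \<le> (\<Sum>i\<in>UNIV. \<bar>z i\<bar>)"
proof -
  have "(\<Sum>j\<in>UNIV. \<bar>\<Sum>i\<in>UNIV. z i * P i j\<bar>) \<le> (\<Sum>j\<in>UNIV. \<Sum>i\<in>UNIV. \<bar>z i\<bar> * P i j)"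
  proof (intro sum_mono)
    fix j
    have "\<bar>\<Sum>i\<in>UNIV. z i * P i j\<bar> \<le> (\<Sum>i\<in>UNIV. \<bar>z i * P i j\<bar>)" by (rule sum_abs)
    also have "\<dots> = (\<Sum>i\<in>UNIV. \<bar>z i\<bar> * P i j)" using nn by (intro sum.cong) (auto simp: abs_mult)
    finally show "\<bar>\<Sum>i\<in>UNIV. z i * P i j\<bar> \<le> (\<Sum>i\<in>UNIV. \<bar>z i\<bar> * P i j)" .
  qed
  also have "\<dots> = (\<Sum>i\<in>UNIV. \<bar>z i\<bar> * (\<Sum>j\<in>UNIV. P i j))"
    by (subst sum.swap) (simp add: sum_distrib_left)
  finally show ?thesis by (simp add: rs)
qed

lemma ineq1:
  fixes g C s :: real
  assumes "g > 0" "C \<ge> 0" "s > 0" "s \<ge> 2 * C / g"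
  shows "g / s - C / s^2 \<ge> g / (2 * s)"
proof -
  have "g * s \<ge> 2 * C" using assms by (simp add: field_simps)
  then have "g * s / 2 - C \<ge> 0" by simp
  then have "(g * s / 2 - C) / s^2 \<ge> 0" by simp
  moreover have "(g * s / 2 - C) / s^2 = g / s - C / s^2 - g / (2 * s)"
    using assms(3) by (simp add: field_simps power2_eq_square)
  ultimately show ?thesis by simp
qed

lemma ineq2:
  fixes a g C s :: real
  assumes "a \<ge> 0" "C \<ge> 0" "s \<ge> 1" "s \<ge> 2 * (a + C)" "g \<le> 1" 
  shows "1 - a / s - C / s^2 \<ge> g / (2 * s)"
proof -
  have s0: "s > 0" using assms by simp
  have "C / s^2 \<le> C / s" using assms s0 by (intro divide_left_mono) (auto simp: power2_eq_square)
  moreover have "(a + C) / s \<le> 1 / 2" using assms s0 by (simp add: field_simps)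
  moreover have "g / (2 * s) \<le> 1 / 2" using assms s0 by (simp add: field_simps)
  moreover have "(a + C) / s = a / s + C / s" by (rule add_divide_distrib)
  ultimately show ?thesis by linarith
qed




locale chain = resolv G \<mu> Kt for G :: "real^'a::finite^'a" and \<mu> Kt +
  fixes L :: "nat \<Rightarrow> real^'a^'a" and p :: "real^'a" and C :: real and n0 :: nat
  assumes nonzero: "\<And>i j. G $ i $ j \<noteq> 0"
    and mu_nn: "\<And>i. \<mu> $ i \<ge> 0" and mu_sum: "(\<Sum>i\<in>UNIV. \<mu> $ i) = 1"
    and mu_inv: "\<And>j. (\<Sum>i\<in>UNIV. \<mu> $ i * G $ i $ j) = 0"
    and Lnn: "\<And>n i j. L n $ i $ j \<ge> 0" and Lrow: "\<And>n i. (\<Sum>j\<in>UNIV. L n $ i $ j) = 1"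
    and Lapp: "\<And>n i j. n \<ge> n0 \<Longrightarrow>
        \<bar>L n $ i $ j - ((if i = j then 1 else 0) + G $ i $ j / real n)\<bar> \<le> C / (real n)^2"
    and p_nn: "\<And>i. p $ i \<ge> 0" and p_sum: "(\<Sum>i\<in>UNIV. p $ i) = 1"
    and n0: "n0 \<ge> 1" and C0: "C \<ge> 0"
begin

lemma L_der: "(\<lambda>n. real (Suc (Suc n)) * (L (Suc n) $ i $ j - (if i = j then 1 else 0))) \<longlonglongrightarrow> G $ i $ j"
proof -
  define e where "e n = L n $ i $ j - ((if i = j then 1 else 0) + G $ i $ j / real n)" for n
  have "(\<lambda>n. real n * e n) \<longlonglongrightarrow> 0"
  proof (rule Lim_null_comparison)
    show "eventually (\<lambda>n. norm (real n * e n) \<le> C / real n) sequentially"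
      unfolding eventually_sequentially
    proof (intro exI allI impI)
      fix n assume n: "n \<ge> n0"
      then have np: "real n > 0" using n0 by simp
      have "\<bar>e n\<bar> \<le> C / (real n)^2" using Lapp[OF n] unfolding e_def .
      then have "real n * \<bar>e n\<bar> \<le> real n * (C / (real n)^2)" using np by (intro mult_left_mono) auto
      also have "\<dots> = C / real n" using np by (simp add: power2_eq_square)
      finally show "norm (real n * e n) \<le> C / real n" using np by (simp add: abs_mult)
    qed
    show "(\<lambda>n. C / real n) \<longlonglongrightarrow> 0" by real_asymp
  qed
  then have h: "(\<lambda>n. real (Suc n) * e (Suc n)) \<longlonglongrightarrow> 0" by (rule LIMSEQ_Suc)
  have id: "real (Suc n) * (L (Suc n) $ i $ j - (if i = j then 1 else 0)) = G $ i $ j + real (Suc n) * e (Suc n)" for n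
    unfolding e_def by (simp add: field_simps)
  have "(\<lambda>n. real (Suc (Suc n)) / real (Suc n) * (real (Suc n) * (L (Suc n) $ i $ j - (if i = j then 1 else 0))))
      \<longlonglongrightarrow> 1 * (G $ i $ j + 0)"
    unfolding id by (intro tendsto_intros lim_q2 h)
  moreover have "real (Suc (Suc n)) / real (Suc n) * (real (Suc n) * (L (Suc n) $ i $ j - (if i = j then 1 else 0)))
      = real (Suc (Suc n)) * (L (Suc n) $ i $ j - (if i = j then 1 else 0))" for n
    by simp
  ultimately show ?thesis by simp
qed

lemma L_lim: "(\<lambda>n. L (Suc n) $ i $ j) \<longlonglongrightarrow> (if i = j then 1 else 0)"
proof -
  have z: "(\<lambda>n. 1 / real (Suc (Suc n))) \<longlonglongrightarrow> 0" by real_asymp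
  have "(\<lambda>n. 1 / real (Suc (Suc n)) * (real (Suc (Suc n)) * (L (Suc n) $ i $ j - (if i = j then 1 else 0)))
        + (if i = j then 1 else 0)) \<longlonglongrightarrow> 0 * G $ i $ j + (if i = j then 1 else 0)"
    by (intro tendsto_intros z L_der)
  moreover have "1 / real (Suc (Suc n)) * (real (Suc (Suc n)) * (L (Suc n) $ i $ j - (if i = j then 1 else 0)))
        + (if i = j then 1 else 0) = L (Suc n) $ i $ j" for n
    by simp
  ultimately show ?thesis by simp
qed

definition d :: "nat \<Rightarrow> 'a \<Rightarrow> real" where "d n y = Fv p L n (\<lambda>_. 0) y"

lemma d0: "d 0 y = p $ y" unfolding d_def by (rule F0)

lemma d_rec: "d (Suc n) y = (\<Sum>x\<in>UNIV. d n x * L (Suc n) $ x $ y)"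
proof -
  have "((\<lambda>_. 0)(y := 0)) = (\<lambda>_::'a. 0::nat)" by auto
  then show ?thesis unfolding d_def Frec by simp
qed

lemma d_nn: "d n y \<ge> 0"
proof (induction n arbitrary: y)
  case 0 then show ?case by (simp add: d0 p_nn)
next
  case (Suc n) then show ?case by (simp add: d_rec sum_nonneg Lnn)
qed

lemma d_sum: "(\<Sum>y\<in>UNIV. d n y) = 1"
proof (induction n)
  case 0 then show ?case by (simp add: d0 p_sum)
next
  case (Suc n)
  have "(\<Sum>y\<in>UNIV. d (Suc n) y) = (\<Sum>x\<in>UNIV. d n x * (\<Sum>y\<in>UNIV. L (Suc n) $ x $ y))"
    unfolding d_rec by (subst sum.swap) (simp add: sum_distrib_left)
  then show ?case using Suc by (simp add: Lrow)
qed

end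




context chain begin

lemma mu_L_err: 
  assumes "Suc n \<ge> n0"
  shows "\<bar>(\<Sum>x\<in>UNIV. \<mu> $ x * L (Suc n) $ x $ y) - \<mu> $ y\<bar> \<le> C / (real (Suc n))^2"
proof -
  let ?s = "real (Suc n)"
  let ?e = "\<lambda>x. L (Suc n) $ x $ y - ((if x = y then 1 else 0) + G $ x $ y / ?s)"
  have "(\<Sum>x\<in>UNIV. \<mu> $ x * ?e x) = (\<Sum>x\<in>UNIV. \<mu> $ x * L (Suc n) $ x $ y) - \<mu> $ y - (\<Sum>x\<in>UNIV. \<mu> $ x * G $ x $ y) / ?s"
  proof -
    have "(\<Sum>x\<in>UNIV. \<mu> $ x * ?e x) = (\<Sum>x\<in>UNIV. \<mu> $ x * L (Suc n) $ x $ y - (if x = y then \<mu> $ x else 0) - \<mu> $ x * G $ x $ y / ?s)"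
      by (intro sum.cong) (auto simp: algebra_simps)
    then show ?thesis by (simp add: sum_subtractf sum_divide_distrib)
  qed
  then have eq: "(\<Sum>x\<in>UNIV. \<mu> $ x * L (Suc n) $ x $ y) - \<mu> $ y = (\<Sum>x\<in>UNIV. \<mu> $ x * ?e x)"
    using mu_inv by simp
  have "\<bar>\<Sum>x\<in>UNIV. \<mu> $ x * ?e x\<bar> \<le> (\<Sum>x\<in>UNIV. \<mu> $ x * (C / ?s^2))"
  proof -
    have "\<bar>\<Sum>x\<in>UNIV. \<mu> $ x * ?e x\<bar> \<le> (\<Sum>x\<in>UNIV. \<bar>\<mu> $ x * ?e x\<bar>)" by (rule sum_abs)
    also have "\<dots> \<le> (\<Sum>x\<in>UNIV. \<mu> $ x * (C / ?s^2))"
    proof (intro sum_mono)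
      fix x
      have h: "\<bar>?e x\<bar> \<le> C / ?s^2" using Lapp[OF assms] .
      have "\<bar>\<mu> $ x * ?e x\<bar> = \<mu> $ x * \<bar>?e x\<bar>" using mu_nn[of x] by (simp only: abs_mult abs_of_nonneg)
      also have "\<dots> \<le> \<mu> $ x * (C / ?s^2)" by (rule mult_left_mono[OF h mu_nn])
      finally show "\<bar>\<mu> $ x * ?e x\<bar> \<le> \<mu> $ x * (C / ?s^2)" .
    qed
    finally show ?thesis .
  qed
  also have "\<dots> = C / ?s^2" by (simp only: sum_distrib_right[symmetric] mu_sum mult_1_left)
  finally show ?thesis unfolding eq .
qed

lemma base_conv: "(\<lambda>n. d n y) \<longlonglongrightarrow> \<mu> $ y"
proof -
  obtain j0 :: 'a where True by simp
  define gmin where "gmin = Min (insert 1 ((\<lambda>i. G $ i $ j0) ` (UNIV - {j0})))"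
  have gpos: "gmin > 0"
    unfolding gmin_def
  proof (subst Min_gr_iff)
    show "\<forall>a\<in>insert 1 ((\<lambda>i. G $ i $ j0) ` (UNIV - {j0})). 0 < a"
    proof
      fix a assume "a \<in> insert 1 ((\<lambda>i. G $ i $ j0) ` (UNIV - {j0}))"
      then consider "a = 1" | i where "i \<noteq> j0" "a = G $ i $ j0" by auto
      then show "0 < a"
      proof cases
        case 2
        then have "G $ i $ j0 \<ge> 0" using gen unfolding generator_matrix_def by auto
        then show ?thesis using nonzero[of i j0] 2 by simp
      qed simp
    qed
  qed auto
  have gle1: "gmin \<le> 1" unfolding gmin_def by (intro Min_le) auto
  have gle: "gmin \<le> G $ i $ j0" if "i \<noteq> j0" for i unfolding gmin_def using that by (intro Min_le) auto
  define c where "c = gmin / 2"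
  have c: "0 < c" "c \<le> 1" using gpos gle1 unfolding c_def by auto
  define S where "S = max (real n0) (max (2 * C / gmin) (2 * (\<bar>G $ j0 $ j0\<bar> + C) + 1))"
  define N1 where "N1 = nat \<lceil>S\<rceil>"
  have colb: "L (Suc n) $ i $ j0 \<ge> c / real (Suc n)" if n: "n \<ge> N1" for n i
  proof -
    let ?s = "real (Suc n)"
    have sS: "?s \<ge> S" using n unfolding N1_def by linarith
    then have sn0: "Suc n \<ge> n0" unfolding S_def by simp
    have s1: "?s \<ge> 1" by simp
    have ap: "\<bar>L (Suc n) $ i $ j0 - ((if i = j0 then 1 else 0) + G $ i $ j0 / ?s)\<bar> \<le> C / ?s^2"
      by (rule Lapp[OF sn0])
    show ?thesis
    proof (cases "i = j0")
      case True
      have "L (Suc n) $ i $ j0 \<ge> 1 + G $ j0 $ j0 / ?s - C / ?s^2" using ap True by simp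
      moreover have "G $ j0 $ j0 / ?s \<ge> - (\<bar>G $ j0 $ j0\<bar> / ?s)"
      proof -
        have "- \<bar>G $ j0 $ j0\<bar> \<le> G $ j0 $ j0" by simp
        then have "- \<bar>G $ j0 $ j0\<bar> / ?s \<le> G $ j0 $ j0 / ?s" by (rule divide_right_mono) simp
        then show ?thesis by simp
      qed
      moreover have "1 - \<bar>G $ j0 $ j0\<bar> / ?s - C / ?s^2 \<ge> gmin / (2 * ?s)"
        using sS s1 gle1 C0 unfolding S_def by (intro ineq2) auto
      ultimately show ?thesis unfolding c_def by simp
    next
      case False
      have "L (Suc n) $ i $ j0 \<ge> G $ i $ j0 / ?s - C / ?s^2" using ap False by simp
      moreover have "G $ i $ j0 / ?s \<ge> gmin / ?s" using gle[OF False] by (simp add: divide_right_mono)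
      moreover have "gmin / ?s - C / ?s^2 \<ge> gmin / (2 * ?s)"
        using sS gpos C0 unfolding S_def by (intro ineq1) auto
      ultimately show ?thesis unfolding c_def by simp
    qed
  qed
  define z where "z n y = d n y - \<mu> $ y" for n y
  define a where "a n = (\<Sum>y\<in>UNIV. \<bar>z n y\<bar>)" for n
  define b where "b n = (\<Sum>y\<in>UNIV. \<bar>(\<Sum>x\<in>UNIV. \<mu> $ x * L (Suc n) $ x $ y) - \<mu> $ y\<bar>)" for n
  have zsum: "(\<Sum>y\<in>UNIV. z n y) = 0" for n unfolding z_def by (simp add: sum_subtractf d_sum mu_sum)
  have zrec: "z (Suc n) y = (\<Sum>x\<in>UNIV. z n x * L (Suc n) $ x $ y) + ((\<Sum>x\<in>UNIV. \<mu> $ x * L (Suc n) $ x $ y) - \<mu> $ y)" for n y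
    unfolding z_def d_rec by (simp add: left_diff_distrib sum_subtractf)
  have rec: "a (Suc n) \<le> (1 - c / real (Suc n)) * a n + b n" if "n \<ge> N1" for n
  proof -
    have "a (Suc n) \<le> (\<Sum>y\<in>UNIV. \<bar>\<Sum>x\<in>UNIV. z n x * L (Suc n) $ x $ y\<bar>) + b n"
      unfolding a_def b_def zrec sum.distrib[symmetric] by (intro sum_mono abs_triangle_ineq)
    also have "(\<Sum>y\<in>UNIV. \<bar>\<Sum>x\<in>UNIV. z n x * L (Suc n) $ x $ y\<bar>) \<le> (1 - c / real (Suc n)) * a n"
      unfolding a_def using c
      by (intro contract[where jz=j0] Lnn Lrow colb[OF that] zsum) auto
    finally show ?thesis by simp
  qed
  have bl: "(\<lambda>n. real (Suc n) * b n) \<longlonglongrightarrow> 0"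
  proof (rule Lim_null_comparison)
    show "eventually (\<lambda>n. norm (real (Suc n) * b n) \<le> real CARD('a) * C / real (Suc n)) sequentially"
      unfolding eventually_sequentially
    proof (intro exI allI impI)
      fix n assume n: "n \<ge> n0"
      have "b n \<le> (\<Sum>y\<in>(UNIV::'a set). C / (real (Suc n))^2)"
        unfolding b_def
      proof (rule sum_mono)
        fix y :: 'a
        show "\<bar>(\<Sum>x\<in>UNIV. \<mu> $ x * L (Suc n) $ x $ y) - \<mu> $ y\<bar> \<le> C / (real (Suc n))^2"
          using n by (intro mu_L_err) simp
      qed
      also have "\<dots> = real CARD('a) * C / (real (Suc n))^2" by simp
      finally have "real (Suc n) * b n \<le> real (Suc n) * (real CARD('a) * C / (real (Suc n))^2)"
        by (intro mult_left_mono) auto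
      also have "\<dots> = real CARD('a) * C / real (Suc n)" by (simp add: power2_eq_square)
      finally show "norm (real (Suc n) * b n) \<le> real CARD('a) * C / real (Suc n)"
        unfolding b_def by simp
    qed
    show "(\<lambda>n. real CARD('a) * C / real (Suc n)) \<longlonglongrightarrow> 0" by real_asymp
  qed
  have "a \<longlonglongrightarrow> 0"
    by (rule seq_zero[OF _ c rec bl]) (auto simp: a_def)
  then have "(\<lambda>n. z n y) \<longlonglongrightarrow> 0"
  proof (rule Lim_null_comparison[rotated])
    show "eventually (\<lambda>n. norm (z n y) \<le> a n) sequentially"
      unfolding a_def by (intro always_eventually allI) (auto intro: member_le_sum)
  qed
  then have "(\<lambda>n. z n y + \<mu> $ y) \<longlonglongrightarrow> 0 + \<mu> $ y" by (intro tendsto_intros)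
  then show ?thesis unfolding z_def by simp
qed

end




lemma sum_delta_mult: "(\<Sum>x\<in>(UNIV::'a::finite set). f x * (if x = y then 1 else (0::real))) = f y"
proof -
  have "(\<Sum>x\<in>(UNIV::'a set). f x * (if x = y then 1 else (0::real))) = (\<Sum>x\<in>UNIV. if x = y then f x else 0)"
    by (intro sum.cong) auto
  also have "\<dots> = f y" by simp
  finally show ?thesis .
qed

lemma msum_upd_gen: "msum (m(y := r)) + m y = msum m + r"
proof -
  have a: "msum m = m y + (\<Sum>i\<in>UNIV - {y}. m i)" unfolding msum_def by (simp add: sum.remove[of UNIV y])
  have "(\<Sum>i\<in>UNIV - {y}. (m(y := r)) i) = (\<Sum>i\<in>UNIV - {y}. m i)" by (intro sum.cong) auto
  then have b: "msum (m(y := r)) = r + (\<Sum>i\<in>UNIV - {y}. m i)" unfolding msum_def by (simp add: sum.remove[of UNIV y])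
  show ?thesis using a b by simp
qed

context chain begin

definition Y :: "nat \<Rightarrow> ('a \<Rightarrow> nat) \<Rightarrow> 'a \<Rightarrow> real" where
  "Y n m y = Fv p L n m y / real (Suc n) ^ msum m"

definition R :: "('a \<Rightarrow> nat) \<Rightarrow> nat \<Rightarrow> 'a \<Rightarrow> real" where
  "R m n y = (\<Sum>r<m y. real (m y choose r) *
      (real (Suc n) ^ msum (m(y := r)) / real (Suc (Suc n)) ^ msum m) *
      (\<Sum>x\<in>UNIV. Y n (m(y := r)) x * L (Suc n) $ x $ y))"

lemma Y_rec:
  "Y (Suc n) m y = (real (Suc n) / real (Suc (Suc n))) ^ msum m * (\<Sum>x\<in>UNIV. Y n m x * L (Suc n) $ x $ y) + R m n y"
proof -
  define T where "T r = real (m y choose r) *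
      (real (Suc n) ^ msum (m(y := r)) / real (Suc (Suc n)) ^ msum m) *
      (\<Sum>x\<in>UNIV. Y n (m(y := r)) x * L (Suc n) $ x $ y)" for r
  have tm: "real (m y choose r) * (\<Sum>x\<in>UNIV. Fv p L n (m(y := r)) x * L (Suc n) $ x $ y) / real (Suc (Suc n)) ^ msum m
      = T r" for r
  proof -
    have "(\<Sum>x\<in>UNIV. Fv p L n (m(y := r)) x * L (Suc n) $ x $ y)
        = real (Suc n) ^ msum (m(y := r)) * (\<Sum>x\<in>UNIV. Y n (m(y := r)) x * L (Suc n) $ x $ y)"
      unfolding Y_def sum_distrib_left by (intro sum.cong refl) simp
    then show ?thesis unfolding T_def by simp
  qed
  have "Y (Suc n) m y = (\<Sum>r\<le>m y. T r)"
    unfolding Y_def Frec sum_divide_distrib tm[symmetric] by simp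
  also have "\<dots> = (\<Sum>r<m y. T r) + T (m y)"
    by (simp add: lessThan_Suc_atMost[symmetric])
  also have "T (m y) = (real (Suc n) / real (Suc (Suc n))) ^ msum m * (\<Sum>x\<in>UNIV. Y n m x * L (Suc n) $ x $ y)"
    unfolding T_def by (simp add: power_divide)
  finally show ?thesis unfolding R_def T_def by simp
qed

lemma Y0: "msum m = 0 \<Longrightarrow> Y n m y = d n y"
proof -
  assume "msum m = 0"
  then have "m = (\<lambda>_. 0)" unfolding msum_def by auto
  then show ?thesis using \<open>msum m = 0\<close> unfolding Y_def d_def by simp
qed

end




context chain begin

lemma sum_L_lim:
  assumes "\<And>x. (\<lambda>n. f n x) \<longlonglongrightarrow> g x"
  shows "(\<lambda>n. \<Sum>x\<in>UNIV. f n x * L (Suc n) $ x $ y) \<longlonglongrightarrow> g y"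
proof -
  have "(\<lambda>n. \<Sum>x\<in>UNIV. f n x * L (Suc n) $ x $ y) \<longlonglongrightarrow> (\<Sum>x\<in>UNIV. g x * (if x = y then 1 else 0))"
    by (intro tendsto_intros assms L_lim)
  then show ?thesis by (simp only: sum_delta_mult)
qed

lemma A3_collapse:
  "(\<Sum>r<m y. real (m y choose r) * (if msum m = Suc (msum (m(y := r))) then 1 else 0) * W (m(y := r)) y)
     = real (m y) * W (m(y := m y - 1)) y"
proof (cases "m y = 0")
  case True then show ?thesis by simp
next
  case False
  then obtain k where k: "m y = Suc k" by (cases "m y") auto
  have "(\<Sum>r<m y. real (m y choose r) * (if msum m = Suc (msum (m(y := r))) then 1 else 0) * W (m(y := r)) y)
      = (\<Sum>r<m y. if r = k then real (m y) * W (m(y := m y - 1)) y else 0)"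
  proof (intro sum.cong refl)
    fix r assume r: "r \<in> {..<m y}"
    have e: "msum (m(y := r)) + m y = msum m + r" by (rule msum_upd_gen)
    have "(msum m = Suc (msum (m(y := r)))) = (r = k)" using e k r by auto
    then show "real (m y choose r) * (if msum m = Suc (msum (m(y := r))) then 1 else 0) * W (m(y := r)) y
        = (if r = k then real (m y) * W (m(y := m y - 1)) y else 0)"
      using k by auto
  qed
  also have "\<dots> = real (m y) * W (m(y := m y - 1)) y" using k by simp
  finally show ?thesis .
qed

lemma Y_conv: "(\<lambda>n. Y n m y) \<longlonglongrightarrow> W m y"
proof (induction "msum m" arbitrary: m y rule: less_induct)
  case less
  show ?case
  proof (cases "msum m = 0")
    case True then show ?thesis using base_conv[of y] W0[OF True] Y0[OF True] by simp
  next
    case False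
    then have Npos: "msum m > 0" by simp
    define q where "q n = real (Suc n) / real (Suc (Suc n))" for n
    define E where "E n y = q n ^ msum m * (\<Sum>x\<in>UNIV. W m x * L (Suc n) $ x $ y) - W m y + R m n y" for n y
    define Z where "Z n y = Y n m y - W m y" for n y
    define a where "a n = (\<Sum>y\<in>UNIV. \<bar>Z n y\<bar>)" for n
    define b where "b n = (\<Sum>y\<in>UNIV. \<bar>E n y\<bar>)" for n
    have Zrec: "Z (Suc n) y = q n ^ msum m * (\<Sum>x\<in>UNIV. Z n x * L (Suc n) $ x $ y) + E n y" for n y
    proof -
      have h: "(\<Sum>x\<in>UNIV. Z n x * L (Suc n) $ x $ y) = (\<Sum>x\<in>UNIV. Y n m x * L (Suc n) $ x $ y) - (\<Sum>x\<in>UNIV. W m x * L (Suc n) $ x $ y)"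
        unfolding Z_def by (simp add: left_diff_distrib sum_subtractf)
      have "Z (Suc n) y = q n ^ msum m * (\<Sum>x\<in>UNIV. Y n m x * L (Suc n) $ x $ y) + R m n y - W m y"
        unfolding Z_def Y_rec q_def by simp
      then show ?thesis unfolding h E_def by (simp add: algebra_simps)
    qed
    have q0: "0 \<le> q n" "q n \<le> 1" for n unfolding q_def by auto
    have qN: "q n ^ msum m \<le> 1 - (1/2) / real (Suc n)" for n
    proof -
      have h1: "q n ^ msum m \<le> q n ^ 1" using Npos q0 by (intro power_decreasing) auto
      have h2: "q n \<le> 1 - (1/2) / real (Suc n)" unfolding q_def by (simp add: field_simps)
      show ?thesis using h1 h2 by simp
    qed
    have rec: "a (Suc n) \<le> (1 - (1/2) / real (Suc n)) * a n + b n" for n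
    proof -
      have "a (Suc n) \<le> (\<Sum>y\<in>UNIV. \<bar>q n ^ msum m * (\<Sum>x\<in>UNIV. Z n x * L (Suc n) $ x $ y)\<bar> + \<bar>E n y\<bar>)"
        unfolding a_def Zrec by (intro sum_mono abs_triangle_ineq)
      also have "\<dots> = q n ^ msum m * (\<Sum>y\<in>UNIV. \<bar>\<Sum>x\<in>UNIV. Z n x * L (Suc n) $ x $ y\<bar>) + b n"
      proof -
        have e: "\<bar>q n ^ msum m * (\<Sum>x\<in>UNIV. Z n x * L (Suc n) $ x $ y)\<bar> = q n ^ msum m * \<bar>\<Sum>x\<in>UNIV. Z n x * L (Suc n) $ x $ y\<bar>" for y
          by (simp only: abs_mult abs_of_nonneg[OF zero_le_power[OF q0(1)]])
        show ?thesis unfolding e b_def by (simp only: sum.distrib sum_distrib_left)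
      qed
      also have "\<dots> \<le> q n ^ msum m * a n + b n"
        unfolding a_def using q0 by (intro add_right_mono mult_left_mono nonexp Lnn Lrow) auto
      also have "\<dots> \<le> (1 - (1/2) / real (Suc n)) * a n + b n"
        unfolding a_def by (intro add_right_mono mult_right_mono qN) (auto intro: sum_nonneg)
      finally show ?thesis .
    qed
    have Elim: "(\<lambda>n. real (Suc (Suc n)) * E n y) \<longlonglongrightarrow> 0" for y
    proof -
      define S where "S n = (\<Sum>x\<in>UNIV. W m x * L (Suc n) $ x $ y)" for n
      define A1 where "A1 n = real (Suc (Suc n)) * (q n ^ msum m - 1) * S n" for n
      define A2 where "A2 n = (\<Sum>x\<in>UNIV. W m x * (real (Suc (Suc n)) * (L (Suc n) $ x $ y - (if x = y then 1 else 0))))" for n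
      define A3 where "A3 n = (\<Sum>r<m y. real (m y choose r) *
         (real (Suc (Suc n)) * real (Suc n) ^ msum (m(y := r)) / real (Suc (Suc n)) ^ msum m) *
         (\<Sum>x\<in>UNIV. Y n (m(y := r)) x * L (Suc n) $ x $ y))" for n
      have id: "real (Suc (Suc n)) * E n y = A1 n + A2 n + A3 n" for n
      proof -
        have a2: "A2 n = real (Suc (Suc n)) * (S n - W m y)"
        proof -
          have "A2 n = real (Suc (Suc n)) * (S n - (\<Sum>x\<in>UNIV. W m x * (if x = y then 1 else 0)))"
            unfolding A2_def S_def by (simp add: sum_distrib_left right_diff_distrib sum_subtractf mult_ac)
          then show ?thesis by (simp only: sum_delta_mult)
        qed
        have a3: "A3 n = real (Suc (Suc n)) * R m n y"
          unfolding A3_def R_def by (simp add: sum_distrib_left mult_ac)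
        show ?thesis unfolding a2 a3 A1_def E_def S_def by (simp add: algebra_simps)
      qed
      have l1: "A1 \<longlonglongrightarrow> - real (msum m) * W m y"
        unfolding A1_def S_def q_def by (intro tendsto_intros lim_aN sum_L_lim)
      have l2: "A2 \<longlonglongrightarrow> (\<Sum>x\<in>UNIV. W m x * G $ x $ y)"
        unfolding A2_def by (intro tendsto_intros L_der)
      have l3: "A3 \<longlonglongrightarrow> (\<Sum>r<m y. real (m y choose r) * (if msum m = Suc (msum (m(y := r))) then 1 else 0) * W (m(y := r)) y)"
        unfolding A3_def
      proof (intro tendsto_intros)
        fix r assume r: "r \<in> {..<m y}"
        have lt: "msum (m(y := r)) < msum m" using msum_upd_gen[of m y r] r by auto
        show "(\<lambda>n. real (Suc (Suc n)) * real (Suc n) ^ msum (m(y := r)) / real (Suc (Suc n)) ^ msum m)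
            \<longlonglongrightarrow> (if msum m = Suc (msum (m(y := r))) then 1 else 0)"
          by (rule lim_kappa[OF lt])
        show "(\<lambda>n. \<Sum>x\<in>UNIV. Y n (m(y := r)) x * L (Suc n) $ x $ y) \<longlonglongrightarrow> W (m(y := r)) y"
          by (intro sum_L_lim less(1)[OF lt])
      qed
      have "(\<lambda>n. A1 n + A2 n + A3 n) \<longlonglongrightarrow>
          - real (msum m) * W m y + (\<Sum>x\<in>UNIV. W m x * G $ x $ y) + real (m y) * W (m(y := m y - 1)) y"
        using tendsto_add[OF tendsto_add[OF l1 l2] l3] unfolding A3_collapse .
      moreover have "- real (msum m) * W m y + (\<Sum>x\<in>UNIV. W m x * G $ x $ y) + real (m y) * W (m(y := m y - 1)) y = 0"
        using W_gen_eq[OF Npos, of y] by simp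
      ultimately show ?thesis unfolding id by simp
    qed
    have bl: "(\<lambda>n. real (Suc n) * b n) \<longlonglongrightarrow> 0"
    proof -
      have "(\<lambda>n. \<Sum>y\<in>UNIV. real (Suc n) / real (Suc (Suc n)) * \<bar>real (Suc (Suc n)) * E n y\<bar>) \<longlonglongrightarrow> (\<Sum>y\<in>(UNIV::'a set). 1 * 0)"
        by (intro tendsto_intros lim_q tendsto_rabs_zero Elim)
      moreover have "(\<Sum>y\<in>UNIV. real (Suc n) / real (Suc (Suc n)) * \<bar>real (Suc (Suc n)) * E n y\<bar>) = real (Suc n) * b n" for n
        unfolding b_def sum_distrib_left by (intro sum.cong refl) (simp add: abs_mult)
      ultimately show ?thesis by simp
    qed
    have "a \<longlonglongrightarrow> 0"
      by (rule seq_zero[where c="1/2" and nz=0, OF _ _ _ rec bl]) (auto simp: a_def)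
    then have "(\<lambda>n. Z n y) \<longlonglongrightarrow> 0"
    proof (rule Lim_null_comparison[rotated])
      show "eventually (\<lambda>n. norm (Z n y) \<le> a n) sequentially"
        unfolding a_def by (intro always_eventually allI) (auto intro: member_le_sum)
    qed
    then have "(\<lambda>n. Z n y + W m y) \<longlonglongrightarrow> 0 + W m y" by (intro tendsto_intros)
    then show ?thesis unfolding Z_def by simp
  qed
qed

lemma occ_conv: "(\<lambda>n. occ_expect p L n (mono m)) \<longlonglongrightarrow> (\<Sum>y\<in>UNIV. W m y)"
proof -
  have "(\<lambda>n. \<Sum>y\<in>UNIV. Y n m y) \<longlonglongrightarrow> (\<Sum>y\<in>UNIV. W m y)"
    by (intro tendsto_intros Y_conv)
  moreover have "occ_expect p L (Suc n) (mono m) = (\<Sum>y\<in>UNIV. Y n m y)" for n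
    unfolding occ_Fv Y_def by (simp add: sum_divide_distrib)
  ultimately have "(\<lambda>n. occ_expect p L (Suc n) (mono m)) \<longlonglongrightarrow> (\<Sum>y\<in>UNIV. W m y)" by simp
  then show ?thesis by (rule filterlim_sequentially_Suc[THEN iffD1])
qed

end




definition boxS :: "(real^'a) set" where "boxS = {x. \<forall>i. 0 \<le> x $ i \<and> x $ i \<le> 1}"

definition clamp :: "real^'a \<Rightarrow> real^'a" where "clamp x = (\<chi> i. max 0 (min 1 (x $ i)))"

lemma occ_in: "occ xs \<in> boxS"
proof -
  have "real (count_list xs i) / real (length xs) \<le> 1" for i
    using count_le_length[of xs i] by (cases "length xs = 0") (auto simp: divide_le_eq_1)
  then show ?thesis unfolding boxS_def occ_def by auto
qed

lemma clamp_id: "x \<in> boxS \<Longrightarrow> clamp x = x"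
  unfolding boxS_def clamp_def by (auto simp: vec_eq_iff)

lemma clamp_in: "clamp x \<in> boxS"
  unfolding boxS_def clamp_def by auto

lemma cont_clamp: "continuous_on UNIV clamp"
  unfolding clamp_def by (intro continuous_intros)

lemma cont_mono: "continuous_on UNIV (mono m)"
  unfolding mono_def by (intro continuous_intros)

lemma closed_boxS: "closed boxS"
proof -
  have eq: "boxS = (\<Inter>i. {x. 0 \<le> x $ i} \<inter> {x. x $ i \<le> 1})" unfolding boxS_def by auto
  have cl:  "closed {x::real^'a. 0 \<le> x $ i}" "closed {x::real^'a. x $ i \<le> 1}" for i
    by (intro closed_Collect_le continuous_intros)+
  show ?thesis unfolding eq by (rule closed_INT) (auto intro: closed_Int cl)
qed

lemma mono_box_bound: "x \<in> boxS \<Longrightarrow> \<bar>mono m x\<bar> \<le> 1"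
  unfolding mono_def boxS_def by (auto simp: abs_prod intro!: prod_le_1 power_le_one)

lemma occ_expect_cong:
  "(\<And>x. x \<in> boxS \<Longrightarrow> f x = g x) \<Longrightarrow> occ_expect p L n f = occ_expect p L n g"
  unfolding occ_expect_def using occ_in by (intro sum.cong refl) auto

context
  fixes \<nu> :: "(real^'a::finite) measure" and p :: "real^'a" and L :: "nat \<Rightarrow> real^'a^'a"
  assumes nu_prob: "prob_space \<nu>" and nu_sets: "sets \<nu> = sets borel"
    and lim: "occ_converges_to p L \<nu>"
begin

lemma meas: "continuous_on UNIV f \<Longrightarrow> f \<in> borel_measurable \<nu>"
  using measurable_cong_sets[OF nu_sets refl] borel_measurable_continuous_onI by blast

lemma integrable_bdd:
  assumes "f \<in> borel_measurable \<nu>" "AE x in \<nu>. \<bar>f x\<bar> \<le> B"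
  shows "integrable \<nu> (f :: _ \<Rightarrow> real)"
proof -
  interpret prob_space \<nu> by (rule nu_prob)
  show ?thesis using assms by (intro integrable_const_bound[where B=B]) auto
qed

lemma AE_box: "AE x in \<nu>. x \<in> boxS"
proof -
  define f0 where "f0 x = min 1 (infdist x boxS)" for x :: "real^'a"
  have c: "continuous_on UNIV f0" unfolding f0_def by (intro continuous_intros)
  have fb: "norm (f0 x) \<le> 1" for x unfolding f0_def using infdist_nonneg[of x boxS] by simp
  have b: "bounded (range f0)"
    unfolding bounded_iff using fb by blast
  have l: "(\<lambda>n. occ_expect p L n f0) \<longlonglongrightarrow> (\<integral>x. f0 x \<partial>\<nu>)"
    by (rule lim[unfolded occ_converges_to_def, rule_format, OF c b])
  have o0: "occ_expect p L n f0 = 0" for n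
  proof -
    have "\<And>xs::'a list. min 1 (infdist (occ xs) (boxS::(real^'a) set)) = 0"
    proof -
      fix xs :: "'a list"
      have "infdist (occ xs) boxS = 0" by (rule infdist_zero[OF occ_in])
      then show "min 1 (infdist (occ xs) boxS) = 0" by simp
    qed
    then show ?thesis unfolding occ_expect_def f0_def by simp
  qed
  have "(\<lambda>n. 0::real) \<longlonglongrightarrow> (\<integral>x. f0 x \<partial>\<nu>)" using l unfolding o0 .
  then have i0: "(\<integral>x. f0 x \<partial>\<nu>) = 0" using LIMSEQ_unique[OF _ tendsto_const] by metis
  have f0nn: "f0 x \<ge> 0" for x unfolding f0_def by (simp add: infdist_nonneg)
  have int: "integrable \<nu> f0"
    by (rule integrable_bdd[where B=1, OF meas[OF c]]) (use fb in auto)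
  have ae0: "AE x in \<nu>. 0 \<le> f0 x" using f0nn by simp
  have "AE x in \<nu>. f0 x = 0" using integral_nonneg_eq_0_iff_AE[OF int ae0] i0 by blast
  then show ?thesis
  proof (rule AE_mp, intro AE_I2 impI)
    fix x assume "f0 x = 0"
    then have "infdist x boxS = 0" unfolding f0_def by (simp add: min_def split: if_splits)
    moreover have "(0::real^'a) \<in> boxS" unfolding boxS_def by simp
    then have "boxS \<noteq> ({}::(real^'a) set)" by blast
    ultimately show "x \<in> boxS" using in_closed_iff_infdist_zero[OF closed_boxS] by blast
  qed
qed

lemma moment_lim:
  "integrable \<nu> (mono m) \<and> (\<lambda>n. occ_expect p L n (mono m)) \<longlonglongrightarrow> (\<integral>x. mono m x \<partial>\<nu>)"
proof -
  define h where "h x = mono m (clamp x)" for x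
  have c: "continuous_on UNIV h" unfolding h_def
    by (rule continuous_on_compose2[OF cont_mono cont_clamp]) auto
  have hb: "\<bar>h x\<bar> \<le> 1" for x unfolding h_def by (rule mono_box_bound[OF clamp_in])
  have b: "bounded (range h)" unfolding bounded_iff using hb by auto
  have l: "(\<lambda>n. occ_expect p L n h) \<longlonglongrightarrow> (\<integral>x. h x \<partial>\<nu>)"
    by (rule lim[unfolded occ_converges_to_def, rule_format, OF c b])
  have ae: "AE x in \<nu>. h x = mono m x"
    using AE_box by eventually_elim (simp add: h_def clamp_id)
  have int: "integrable \<nu> h" by (rule integrable_bdd[where B=1, OF meas[OF c]]) (auto simp: hb)
  have "integrable \<nu> (mono m)"
    using integrable_cong_AE[OF meas[OF c] meas[OF cont_mono] ae] int by simp
  moreover have "(\<integral>x. h x \<partial>\<nu>) = (\<integral>x. mono m x \<partial>\<nu>)"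
    by (rule integral_cong_AE[OF meas[OF c] meas[OF cont_mono] ae])
  moreover have "occ_expect p L n h = occ_expect p L n (mono m)" for n
    by (rule occ_expect_cong) (simp add: h_def clamp_id)
  ultimately show ?thesis using l by simp
qed

end




lemma occ_add: "occ_expect p L n (\<lambda>x. f x + g x) = occ_expect p L n f + occ_expect p L n g"
  unfolding occ_expect_def by (simp add: distrib_left sum.distrib)

lemma occ_scale: "occ_expect p L n (\<lambda>x. c * f x) = c * occ_expect p L n f"
  unfolding occ_expect_def by (simp add: sum_distrib_left mult_ac)

lemma occ_zero: "occ_expect p L n (\<lambda>x. 0) = 0"
  unfolding occ_expect_def by simp

lemma mono_upd: "x $ i * mono m x = mono (m(i := Suc (m i))) x"
proof -
  have a: "mono m x = x $ i ^ m i * (\<Prod>j\<in>UNIV - {i}. x $ j ^ m j)"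
    unfolding mono_def by (rule prod.remove) auto
  have "(\<Prod>j\<in>UNIV - {i}. x $ j ^ (m(i := Suc (m i))) j) = (\<Prod>j\<in>UNIV - {i}. x $ j ^ m j)"
    by (intro prod.cong) auto
  moreover have "mono (m(i := Suc (m i))) x = x $ i ^ Suc (m i) * (\<Prod>j\<in>UNIV - {i}. x $ j ^ (m(i := Suc (m i))) j)"
    unfolding mono_def by (subst prod.remove[of UNIV i]) auto
  ultimately show ?thesis unfolding a by simp
qed

lemma mono_zero: "mono (\<lambda>_. 0) x = 1"
  unfolding mono_def by simp

lemma linear_expand:
  fixes f :: "real^'a::finite \<Rightarrow> real"
  assumes "bounded_linear f"
  shows "f x = (\<Sum>i\<in>UNIV. x $ i * f (axis i 1))"
proof -
  interpret bounded_linear f by (rule assms)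
  have "f x = f (\<Sum>i\<in>UNIV. (x $ i) *\<^sub>R axis i 1)"
    using basis_expansion[of x] by (simp add: scalar_mult_eq_scaleR)
  also have "\<dots> = (\<Sum>i\<in>UNIV. x $ i * f (axis i 1))" by (simp add: sum scale)
  finally show ?thesis .
qed

context
  fixes \<nu> :: "(real^'a::finite) measure" and p :: "real^'a" and L :: "nat \<Rightarrow> real^'a^'a"
  assumes nu_prob: "prob_space \<nu>" and nu_sets: "sets \<nu> = sets borel"
    and box: "AE x in \<nu>. x \<in> boxS"
    and mom: "\<And>m. integrable \<nu> (mono m) \<and> (\<lambda>n. occ_expect p L n (mono m)) \<longlonglongrightarrow> (\<integral>x. mono m x \<partial>\<nu>)"
    and pp_nn: "\<And>xs. path_prob p L xs \<ge> 0"
    and pp_sum: "\<And>n. (\<Sum>xs\<in>{xs. length xs = n}. path_prob p L xs) = 1"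
begin

definition PP :: "(real^'a \<Rightarrow> real) \<Rightarrow> bool" where
  "PP h \<longleftrightarrow> integrable \<nu> h \<and> (\<lambda>n. occ_expect p L n h) \<longlonglongrightarrow> (\<integral>x. h x \<partial>\<nu>)"

definition QQ :: "(real^'a \<Rightarrow> real) \<Rightarrow> bool" where
  "QQ g \<longleftrightarrow> (\<forall>m. PP (\<lambda>x. g x * mono m x))"

definition RR :: "(real^'a \<Rightarrow> real) \<Rightarrow> bool" where
  "RR f \<longleftrightarrow> (\<forall>g. QQ g \<longrightarrow> QQ (\<lambda>x. f x * g x))"

lemma PP_add: "PP f \<Longrightarrow> PP g \<Longrightarrow> PP (\<lambda>x. f x + g x)"
  unfolding PP_def occ_add by (auto intro: tendsto_add)

lemma PP_scale: "PP f \<Longrightarrow> PP (\<lambda>x. c * f x)"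
  unfolding PP_def occ_scale by (auto intro: tendsto_mult_left)

lemma PP_zero: "PP (\<lambda>x. 0)"
  unfolding PP_def occ_zero by simp

lemma PP_sum: "finite I \<Longrightarrow> (\<And>i. i \<in> I \<Longrightarrow> PP (f i)) \<Longrightarrow> PP (\<lambda>x. \<Sum>i\<in>I. f i x)"
proof (induction I rule: finite_induct)
  case empty then show ?case using PP_zero by simp
next
  case (insert a I)
  have "PP (\<lambda>x. f a x + (\<Sum>i\<in>I. f i x))" using insert by (intro PP_add) auto
  then show ?case using insert by simp
qed

lemma PP_ext: "PP f \<Longrightarrow> (\<And>x. f x = g x) \<Longrightarrow> PP g"
proof -
  assume "PP f" "\<And>x. f x = g x"
  then have "f = g" by auto
  then show "PP g" using \<open>PP f\<close> by simp
qed

lemma RR_poly: "real_polynomial_function f \<Longrightarrow> RR f"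
proof (induction f rule: real_polynomial_function.induct)
  case (linear f)
  show ?case unfolding RR_def QQ_def
  proof (intro allI impI)
    fix g m assume Q: "\<forall>m. PP (\<lambda>x. g x * mono m x)"
    have "PP (\<lambda>x. \<Sum>i\<in>UNIV. f (axis i 1) * (g x * mono (m(i := Suc (m i))) x))"
      using Q by (intro PP_sum PP_scale) auto
    moreover have "(\<Sum>i\<in>UNIV. f (axis i 1) * (g x * mono (m(i := Suc (m i))) x)) = f x * g x * mono m x" for x
    proof -
      have "(\<Sum>i\<in>UNIV. f (axis i 1) * (g x * mono (m(i := Suc (m i))) x))
          = (\<Sum>i\<in>UNIV. x $ i * f (axis i 1)) * g x * mono m x"
        unfolding mono_upd[symmetric] sum_distrib_right by (intro sum.cong) auto
      then show ?thesis using linear_expand[OF linear, of x] by simp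
    qed
    ultimately show "PP (\<lambda>x. f x * g x * mono m x)" by (rule PP_ext)
  qed
next
  case (const c)
  show ?case unfolding RR_def QQ_def
  proof (intro allI impI)
    fix g m assume Q: "\<forall>m. PP (\<lambda>x. g x * mono m x)"
    then have "PP (\<lambda>x. c * (g x * mono m x))" by (intro PP_scale) auto
    then show "PP (\<lambda>x. c * g x * mono m x)" by (rule PP_ext) simp
  qed
next
  case (add f1 f2)
  show ?case unfolding RR_def
  proof (intro allI impI)
    fix g assume Q: "QQ g"
    have "PP (\<lambda>x. f1 x * g x * mono m x + f2 x * g x * mono m x)" for m
      using add.IH Q unfolding RR_def QQ_def by (intro PP_add) auto
    then show "QQ (\<lambda>x. (f1 x + f2 x) * g x)" unfolding QQ_def
      by (auto elim!: PP_ext simp: algebra_simps)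
  qed
next
  case (mult f1 f2)
  show ?case unfolding RR_def
  proof (intro allI impI)
    fix g assume Q: "QQ g"
    then have "QQ (\<lambda>x. f2 x * g x)" using mult.IH(2) unfolding RR_def by blast
    then have "QQ (\<lambda>x. f1 x * (f2 x * g x))" using mult.IH(1) unfolding RR_def by blast
    then show "QQ (\<lambda>x. f1 x * f2 x * g x)" unfolding QQ_def
      by (auto elim!: PP_ext simp: algebra_simps)
  qed
qed

lemma QQ_one: "QQ (\<lambda>x. 1)"
  unfolding QQ_def PP_def using mom by simp

lemma PP_poly: "polynomial_function g \<Longrightarrow> PP g"
proof -
  assume "polynomial_function g"
  then have "RR g" using RR_poly real_polynomial_function_eq by blast
  then have "QQ (\<lambda>x. g x * 1)" using QQ_one unfolding RR_def by blast
  then have "PP (\<lambda>x. g x * 1 * mono (\<lambda>_. 0) x)" unfolding QQ_def by blast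
  then show "PP g" by (rule PP_ext) (simp add: mono_zero)
qed

lemma meas': "continuous_on UNIV f \<Longrightarrow> f \<in> borel_measurable \<nu>"
  using measurable_cong_sets[OF nu_sets refl] borel_measurable_continuous_onI by blast

lemma occ_diff_bound:
  assumes "\<And>x. x \<in> boxS \<Longrightarrow> \<bar>f x - g x\<bar> \<le> e"
  shows "\<bar>occ_expect p L n f - occ_expect p L n g\<bar> \<le> e"
proof -
  have "\<bar>occ_expect p L n f - occ_expect p L n g\<bar> = \<bar>\<Sum>xs\<in>{xs. length xs = n}. path_prob p L xs * (f (occ xs) - g (occ xs))\<bar>"
    unfolding occ_expect_def by (simp add: sum_subtractf right_diff_distrib)
  also have "\<dots> \<le> (\<Sum>xs\<in>{xs. length xs = n}. \<bar>path_prob p L xs * (f (occ xs) - g (occ xs))\<bar>)" by (rule sum_abs)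
  also have "\<dots> \<le> (\<Sum>xs\<in>{xs. length xs = n}. path_prob p L xs * e)"
  proof (intro sum_mono)
    fix xs :: "'a list"
    have "\<bar>path_prob p L xs * (f (occ xs) - g (occ xs))\<bar> = path_prob p L xs * \<bar>f (occ xs) - g (occ xs)\<bar>"
      using pp_nn[of xs] by (simp add: abs_mult)
    also have "\<dots> \<le> path_prob p L xs * e" using assms[OF occ_in] pp_nn[of xs] by (rule mult_left_mono)
    finally show "\<bar>path_prob p L xs * (f (occ xs) - g (occ xs))\<bar> \<le> path_prob p L xs * e" .
  qed
  also have "\<dots> = e" using pp_sum[of n] by (simp add: sum_distrib_right[symmetric])
  finally show ?thesis .
qed

lemma conv_all: "occ_converges_to p L \<nu>"
  unfolding occ_converges_to_def
proof (intro allI impI)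
  fix f :: "real^'a \<Rightarrow> real"
  assume c: "continuous_on UNIV f" and b: "bounded (range f)"
  interpret prob_space \<nu> by (rule nu_prob)
  obtain B where B: "\<And>x. \<bar>f x\<bar> \<le> B" using b unfolding bounded_iff by auto
  have fint: "integrable \<nu> f" by (rule integrable_const_bound[where B=B]) (auto simp: B meas'[OF c])
  have cb: "cbox (0::real^'a) 1 = boxS" unfolding boxS_def by (auto simp: mem_box_cart)
  show "(\<lambda>n. occ_expect p L n f) \<longlonglongrightarrow> (\<integral>x. f x \<partial>\<nu>)"
  proof (rule LIMSEQ_I)
    fix r :: real assume r: "r > 0"
    define e where "e = r / 4"
    have e: "e > 0" using r unfolding e_def by simp
    obtain g where g: "polynomial_function g" "\<forall>x\<in>cbox (0::real^'a) 1. norm (f x - g x) < e"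
      using Stone_Weierstrass_polynomial_function[OF compact_cbox[of "0::real^'a" 1] continuous_on_subset[OF c subset_UNIV] e] by blast
    have gb: "\<And>x. x \<in> boxS \<Longrightarrow> \<bar>f x - g x\<bar> \<le> e" using g(2) unfolding cb by (auto intro: less_imp_le)
    have Pg: "PP g" by (rule PP_poly[OF g(1)])
    then have gint: "integrable \<nu> g" and gl: "(\<lambda>n. occ_expect p L n g) \<longlonglongrightarrow> (\<integral>x. g x \<partial>\<nu>)"
      unfolding PP_def by auto
    obtain N where N: "\<And>n. n \<ge> N \<Longrightarrow> norm (occ_expect p L n g - (\<integral>x. g x \<partial>\<nu>)) < e"
      using LIMSEQ_D[OF gl e] by auto
    have ib: "\<bar>(\<integral>x. f x \<partial>\<nu>) - (\<integral>x. g x \<partial>\<nu>)\<bar> \<le> e"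
    proof -
      have d: "(\<integral>x. f x \<partial>\<nu>) - (\<integral>x. g x \<partial>\<nu>) = (\<integral>x. f x - g x \<partial>\<nu>)"
        using fint gint by simp
      have gb1: "f x - g x \<le> e" "- e \<le> f x - g x" if "x \<in> boxS" for x
        using gb[OF that] by linarith+
      have ae1: "AE x in \<nu>. f x - g x \<le> e" using box by eventually_elim (rule gb1)
      have ae2: "AE x in \<nu>. - e \<le> f x - g x" using box by eventually_elim (rule gb1)
      have "(\<integral>x. f x - g x \<partial>\<nu>) \<le> (\<integral>x. e \<partial>\<nu>)"
        by (rule integral_mono_AE) (use fint gint ae1 in auto)
      moreover have "(\<integral>x. - e \<partial>\<nu>) \<le> (\<integral>x. f x - g x \<partial>\<nu>)"
        by (rule integral_mono_AE) (use fint gint ae2 in auto)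
      moreover have "(\<integral>x. e \<partial>\<nu>) = e" "(\<integral>x. - e \<partial>\<nu>) = - e"
        using prob_space.prob_space[OF nu_prob] by simp_all
      ultimately have "- e \<le> (\<integral>x. f x - g x \<partial>\<nu>)" "(\<integral>x. f x - g x \<partial>\<nu>) \<le> e" by linarith+
      then show ?thesis unfolding d by (auto simp: abs_le_iff)
    qed
    show "\<exists>no. \<forall>n\<ge>no. norm (occ_expect p L n f - (\<integral>x. f x \<partial>\<nu>)) < r"
    proof (intro exI allI impI)
      fix n assume n: "n \<ge> N"
      have "\<bar>occ_expect p L n f - occ_expect p L n g\<bar> \<le> e" by (rule occ_diff_bound[OF gb])
      moreover have "\<bar>occ_expect p L n g - (\<integral>x. g x \<partial>\<nu>)\<bar> < e" using N[OF n] by simp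
      ultimately have "\<bar>occ_expect p L n f - (\<integral>x. f x \<partial>\<nu>)\<bar> < 3 * e" using ib by linarith
      then show "norm (occ_expect p L n f - (\<integral>x. f x \<partial>\<nu>)) < r" unfolding e_def using r by simp
    qed
  qed
qed

end




lemma cnt_rep: "count_list (replicate N i) j = (if i = j then N else 0)"
  by (induction N) auto

lemma pp_nonneg:
  assumes "\<And>i. p $ i \<ge> 0" "\<And>n i j. L n $ i $ j \<ge> 0"
  shows "path_prob p L xs \<ge> 0"
  unfolding path_prob_def using assms by (auto intro!: prod_nonneg mult_nonneg_nonneg)

context chain begin

lemma pp_total: "(\<Sum>xs\<in>{xs. length xs = n}. path_prob p L xs) = 1"
proof (cases n)
  case 0
  then have "{xs::'a list. length xs = n} = {[]}" by auto
  then show ?thesis by (simp add: path_prob_def)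
next
  case (Suc k)
  have "(\<Sum>xs\<in>{xs. length xs = n}. path_prob p L xs) = (\<Sum>x\<in>UNIV. d k x)"
    unfolding Suc sum_last d_def Fv_def by simp
  then show ?thesis by (simp add: d_sum)
qed

end

context resolv begin

lemma Kt_err:
  "\<bar>Kt n $ i $ j - ((if i = j then 1 else 0) + G $ i $ j / real n)\<bar>
     \<le> (\<Sum>k\<in>UNIV. \<Sum>l\<in>UNIV. \<bar>(G ** G) $ k $ l\<bar>) / (real n)^2"
proof -
  let ?GG = "G ** G"
  have e: "Kt n $ i $ j = (if i = j then 1 else 0) + G $ i $ j / real n + (1 / real n)^2 * (Kt n ** ?GG) $ i $ j"
    by (subst Kt_props(6)) (simp add: mat1_entry)
  have "\<bar>(Kt n ** ?GG) $ i $ j\<bar> \<le> (\<Sum>k\<in>UNIV. \<bar>?GG $ k $ j\<bar>)"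
  proof -
    have "\<bar>(Kt n ** ?GG) $ i $ j\<bar> = \<bar>\<Sum>k\<in>UNIV. Kt n $ i $ k * ?GG $ k $ j\<bar>"
      by (simp add: matrix_matrix_mult_def)
    also have "\<dots> \<le> (\<Sum>k\<in>UNIV. \<bar>Kt n $ i $ k * ?GG $ k $ j\<bar>)" by (rule sum_abs)
    also have "\<dots> \<le> (\<Sum>k\<in>UNIV. \<bar>?GG $ k $ j\<bar>)"
    proof (intro sum_mono)
      fix k
      have "\<bar>Kt n $ i $ k * ?GG $ k $ j\<bar> = Kt n $ i $ k * \<bar>?GG $ k $ j\<bar>"
        using Kt_props(3)[of n i k] by (simp add: abs_mult)
      also have "\<dots> \<le> 1 * \<bar>?GG $ k $ j\<bar>" by (intro mult_right_mono Kt_props(5)) auto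
      finally show "\<bar>Kt n $ i $ k * ?GG $ k $ j\<bar> \<le> \<bar>?GG $ k $ j\<bar>" by simp
    qed
    finally show ?thesis .
  qed
  also have "\<dots> \<le> (\<Sum>k\<in>UNIV. \<Sum>l\<in>UNIV. \<bar>?GG $ k $ l\<bar>)"
    by (intro sum_mono member_le_sum) auto
  finally have b: "\<bar>(Kt n ** ?GG) $ i $ j\<bar> \<le> (\<Sum>k\<in>UNIV. \<Sum>l\<in>UNIV. \<bar>?GG $ k $ l\<bar>)" .
  have "\<bar>Kt n $ i $ j - ((if i = j then 1 else 0) + G $ i $ j / real n)\<bar> = (1 / real n)^2 * \<bar>(Kt n ** ?GG) $ i $ j\<bar>"
    unfolding e by (simp add: abs_mult)
  also have "\<dots> \<le> (1 / real n)^2 * (\<Sum>k\<in>UNIV. \<Sum>l\<in>UNIV. \<bar>?GG $ k $ l\<bar>)"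
    by (intro mult_left_mono b) auto
  finally show ?thesis by (simp add: power_divide)
qed

end

theorem mainTheorem8:
  fixes G :: "real^'a^'a" and \<mu> :: "real^'a" and M :: nat
    and K Kt :: "nat \<Rightarrow> real^'a^'a" and \<pi> :: "real^'a" and \<nu> :: "(real^'a) measure"
  assumes gen: "generator_matrix G"
    and nonzero: "\<forall>i j. G $ i $ j \<noteq> 0"
    and mu_stoch: "stochastic_vector \<mu>"
    and mu_inv: "\<mu> v* G = 0"
    and M_def: "\<forall>n>M. \<forall>i j. (mat 1 + (1 / real n) *\<^sub>R G) $ i $ j \<ge> 0"
    and K_def: "\<forall>n. K n = (if n > M then mat 1 + (1 / real n) *\<^sub>R G else mat 1)"
    and Kt_def: "\<forall>n. Kt n = matrix_inv (mat 1 - (1 / real n) *\<^sub>R G)"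
    and pi_stoch: "stochastic_vector \<pi>"
    and nu_prob: "prob_space \<nu>" and nu_sets: "sets \<nu> = sets borel"
    and nu_lim: "occ_converges_to \<pi> K \<nu>"
  shows "(\<forall>i j. (\<lambda>n. Kt n $ i $ j - K n $ i $ j) \<in> O(\<lambda>n. 1 / (real n)^2))
    \<and> occ_converges_to \<mu> Kt \<nu>
    \<and> (\<forall>m :: 'a \<Rightarrow> nat. (\<Sum>i\<in>UNIV. m i) > 0 \<longrightarrow>
          (\<integral>x. (\<Prod>i\<in>UNIV. (x $ i) ^ m i) \<partial>\<nu>) =
          (\<Prod>i\<in>UNIV. fact (m i)) / fact (\<Sum>i\<in>UNIV. m i) *
          (\<Sum>xs\<in>{xs. length xs = (\<Sum>i\<in>UNIV. m i) \<and> (\<forall>i. count_list xs i = m i)}.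
              path_prob \<mu> Kt xs))
    \<and> (\<forall>i (N::nat). N > 0 \<longrightarrow> (\<integral>x. (x $ i) ^ N \<partial>\<nu>) = path_prob \<mu> Kt (replicate N i))"
proof -
  interpret R: resolv G \<mu> Kt using gen Kt_def by unfold_locales auto
  define CC where "CC = (\<Sum>k\<in>UNIV. \<Sum>l\<in>UNIV. \<bar>(G ** G) $ k $ l\<bar>)"
  have CC0: "CC \<ge> 0" unfolding CC_def by (intro sum_nonneg) auto
  have mu_nn: "\<And>i. \<mu> $ i \<ge> 0" and mu_sum: "(\<Sum>i\<in>UNIV. \<mu> $ i) = 1"
    using mu_stoch unfolding stochastic_vector_def by auto
  have pi_nn: "\<And>i. \<pi> $ i \<ge> 0" and pi_sum: "(\<Sum>i\<in>UNIV. \<pi> $ i) = 1"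
    using pi_stoch unfolding stochastic_vector_def by auto
  have mu_inv': "\<And>j. (\<Sum>i\<in>UNIV. \<mu> $ i * G $ i $ j) = 0"
  proof -
    fix j
    have "(\<mu> v* G) $ j = 0" using mu_inv by simp
    then show "(\<Sum>i\<in>UNIV. \<mu> $ i * G $ i $ j) = 0" by (simp add: vector_matrix_mult_def mult.commute)
  qed
  have Gsum: "\<And>i. (\<Sum>j\<in>UNIV. G $ i $ j) = 0" using gen_rowsum[OF gen] .
  have Kent: "K n $ i $ j = (if n > M then (if i = j then 1 else 0) + G $ i $ j / real n else (if i = j then 1 else 0))" for n i j
    using K_def by (simp add: mat1_entry)
  interpret KC: chain G \<mu> Kt K \<pi> 0 "Suc M"
  proof unfold_locales
    show "\<And>i j. G $ i $ j \<noteq> 0" using nonzero by auto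
    show "\<And>i. 0 \<le> \<mu> $ i" by (rule mu_nn)
    show "(\<Sum>i\<in>UNIV. \<mu> $ i) = 1" by (rule mu_sum)
    show "\<And>j. (\<Sum>i\<in>UNIV. \<mu> $ i * G $ i $ j) = 0" by (rule mu_inv')
    show "\<And>n i j. 0 \<le> K n $ i $ j"
    proof -
      fix n i j
      show "0 \<le> K n $ i $ j"
      proof (cases "n > M")
        case True then show ?thesis using M_def K_def by simp
      qed (simp add: Kent)
    qed
    show "\<And>n i. (\<Sum>j\<in>UNIV. K n $ i $ j) = 1"
    proof -
      fix n i
      show "(\<Sum>j\<in>UNIV. K n $ i $ j) = 1"
      proof (cases "n > M")
        case True
        have "(\<Sum>j\<in>UNIV. K n $ i $ j) = (\<Sum>j\<in>UNIV. (if i = j then 1 else 0)) + (\<Sum>j\<in>UNIV. G $ i $ j) / real n"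
          unfolding Kent using True by (simp add: sum.distrib sum_divide_distrib)
        then show ?thesis using Gsum by simp
      qed (simp add: Kent)
    qed
    show "\<And>n i j. Suc M \<le> n \<Longrightarrow> \<bar>K n $ i $ j - ((if i = j then 1 else 0) + G $ i $ j / real n)\<bar> \<le> 0 / (real n)^2"
      by (simp add: Kent)
  qed (auto simp: pi_nn pi_sum)
  interpret TC: chain G \<mu> Kt Kt \<mu> CC 1
  proof unfold_locales
    show "\<And>i j. G $ i $ j \<noteq> 0" using nonzero by auto
    show "\<And>i. 0 \<le> \<mu> $ i" by (rule mu_nn)
    show "(\<Sum>i\<in>UNIV. \<mu> $ i) = 1" by (rule mu_sum)
    show "\<And>j. (\<Sum>i\<in>UNIV. \<mu> $ i * G $ i $ j) = 0" by (rule mu_inv')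
    show "\<And>n i j. 0 \<le> Kt n $ i $ j" by (rule R.Kt_props(3))
    show "\<And>n i. (\<Sum>j\<in>UNIV. Kt n $ i $ j) = 1" by (rule R.Kt_props(4))
    show "\<And>n i j. 1 \<le> n \<Longrightarrow> \<bar>Kt n $ i $ j - ((if i = j then 1 else 0) + G $ i $ j / real n)\<bar> \<le> CC / (real n)^2"
      unfolding CC_def by (rule R.Kt_err)
  qed (auto simp: mu_nn mu_sum CC0)
  have box: "AE x in \<nu>. x \<in> boxS" by (rule AE_box[OF nu_prob nu_sets nu_lim])
  have mom: "integrable \<nu> (mono m) \<and> (\<integral>x. mono m x \<partial>\<nu>) = (\<Sum>y\<in>UNIV. R.W m y)" for m
  proof -
    have a: "integrable \<nu> (mono m) \<and> (\<lambda>n. occ_expect \<pi> K n (mono m)) \<longlonglongrightarrow> (\<integral>x. mono m x \<partial>\<nu>)"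
      by (rule moment_lim[OF nu_prob nu_sets nu_lim])
    have b: "(\<lambda>n. occ_expect \<pi> K n (mono m)) \<longlonglongrightarrow> (\<Sum>y\<in>UNIV. R.W m y)" by (rule KC.occ_conv)
    show ?thesis using a LIMSEQ_unique[OF conjunct2[OF a] b] by simp
  qed
  have c1: "\<forall>i j. (\<lambda>n. Kt n $ i $ j - K n $ i $ j) \<in> O(\<lambda>n. 1 / (real n)^2)"
  proof (intro allI bigoI)
    fix i j
    show "eventually (\<lambda>n. norm (Kt n $ i $ j - K n $ i $ j) \<le> CC * norm (1 / (real n)^2)) at_top"
      unfolding eventually_at_top_linorder
    proof (intro exI[of _ "Suc M"] allI impI)
      fix n assume n: "n \<ge> Suc M"
      have "\<bar>Kt n $ i $ j - K n $ i $ j\<bar> \<le> CC / (real n)^2"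
        using R.Kt_err[of n i j] n unfolding CC_def by (simp add: Kent)
      then show "norm (Kt n $ i $ j - K n $ i $ j) \<le> CC * norm (1 / (real n)^2)" by simp
    qed
  qed
  have c2: "occ_converges_to \<mu> Kt \<nu>"
  proof (rule conv_all[OF nu_prob nu_sets box])
    show "integrable \<nu> (mono m) \<and> (\<lambda>n. occ_expect \<mu> Kt n (mono m)) \<longlonglongrightarrow> (\<integral>x. mono m x \<partial>\<nu>)" for m
      using mom[of m] TC.occ_conv[of m] by simp
    show "path_prob \<mu> Kt xs \<ge> 0" for xs by (rule pp_nonneg[OF mu_nn R.Kt_props(3)])
    show "(\<Sum>xs\<in>{xs. length xs = n}. path_prob \<mu> Kt xs) = 1" for n by (rule TC.pp_total)
  qed
  have c3: "(\<integral>x. (\<Prod>i\<in>UNIV. (x $ i) ^ m i) \<partial>\<nu>) =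
          (\<Prod>i\<in>UNIV. fact (m i)) / fact (\<Sum>i\<in>UNIV. m i) *
          (\<Sum>xs\<in>{xs. length xs = (\<Sum>i\<in>UNIV. m i) \<and> (\<forall>i. count_list xs i = m i)}.
              path_prob \<mu> Kt xs)" if m: "(\<Sum>i\<in>UNIV. m i) > 0" for m :: "'a \<Rightarrow> nat"
  proof -
    have "(\<integral>x. (\<Prod>i\<in>UNIV. (x $ i) ^ m i) \<partial>\<nu>) = (\<integral>x. mono m x \<partial>\<nu>)" unfolding mono_def ..
    also have "\<dots> = (\<Sum>y\<in>UNIV. R.W m y)" using mom by simp
    also have "\<dots> = (\<Prod>i\<in>UNIV. fact (m i)) / fact (msum m) * (\<Sum>w\<in>lists_m m. path_prob \<mu> Kt w)"
      using m by (intro R.sum_W) (simp add: msum_def)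
    finally show ?thesis unfolding lists_m_def msum_def .
  qed
  have c4: "(\<integral>x. (x $ i) ^ N \<partial>\<nu>) = path_prob \<mu> Kt (replicate N i)" if N: "N > 0" for i N
  proof -
    define m where "m j = (if j = i then N else 0)" for j
    have ms: "(\<Sum>j\<in>UNIV. m j) = N" unfolding m_def by simp
    have pr: "(\<Prod>j\<in>UNIV. (x $ j) ^ m j) = (x $ i) ^ N" for x
    proof -
      have "(\<Prod>j\<in>UNIV. (x $ j) ^ m j) = (x $ i) ^ m i * (\<Prod>j\<in>UNIV - {i}. (x $ j) ^ m j)"
        by (rule prod.remove) auto
      also have "(\<Prod>j\<in>UNIV - {i}. (x $ j) ^ m j) = 1" by (intro prod.neutral) (auto simp: m_def)
      finally show ?thesis by (simp add: m_def)
    qed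
    have pf: "(\<Prod>j\<in>UNIV. fact (m j) :: real) = fact N"
    proof -
      have "(\<Prod>j\<in>UNIV. fact (m j) :: real) = fact (m i) * (\<Prod>j\<in>UNIV - {i}. fact (m j))"
        by (rule prod.remove) auto
      also have "(\<Prod>j\<in>UNIV - {i}. fact (m j) :: real) = 1" by (intro prod.neutral) (auto simp: m_def)
      finally show ?thesis by (simp add: m_def)
    qed
    have ls: "{xs. length xs = N \<and> (\<forall>j. count_list xs j = m j)} = {replicate N i}"
    proof (intro set_eqI iffI)
      fix xs assume "xs \<in> {xs. length xs = N \<and> (\<forall>j. count_list xs j = m j)}"
      then have xs: "length xs = N" "\<forall>j. count_list xs j = m j" by auto
      have "\<forall>y\<in>set xs. y = i"
      proof
        fix y assume y: "y \<in> set xs"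
        show "y = i"
        proof (rule ccontr)
          assume "y \<noteq> i"
          then have "count_list xs y = 0" using xs(2) by (simp add: m_def)
          then show False using y by (simp add: count_list_0_iff)
        qed
      qed
      then have "replicate (length xs) i = xs" by (rule replicate_length_same)
      then show "xs \<in> {replicate N i}" using xs(1) by simp
    next
      fix xs assume "xs \<in> {replicate N i}"
      then show "xs \<in> {xs. length xs = N \<and> (\<forall>j. count_list xs j = m j)}"
        by (auto simp: m_def cnt_rep)
    qed
    have "(\<integral>x. (\<Prod>j\<in>UNIV. (x $ j) ^ m j) \<partial>\<nu>) = (\<Prod>j\<in>UNIV. fact (m j)) / fact (\<Sum>j\<in>UNIV. m j) *
          (\<Sum>xs\<in>{xs. length xs = (\<Sum>j\<in>UNIV. m j) \<and> (\<forall>j. count_list xs j = m j)}. path_prob \<mu> Kt xs)"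
      using c3[of m] N ms by simp
    then show ?thesis unfolding pr ms pf ls by simp
  qed
  show ?thesis using c1 c2 c3 c4 by blast
qed



end
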